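(* Let $X$ be a complex Banach space, let $B,A_1,\dots,A_n$ be closed linear operators on $X$, let $C\in L(X)$ be injective, let $k:\mathbb N_0\to\mathbb C$ with $k(0)\neq0$, and let $a_1,\dots,a_n:\mathbb N_0\to\mathbb C$ with $a_i(0)\neq0$ for all $i$. Let $T:=B-\sum_{i=1}^{n}a_i(0)A_i$ with domain $D(B)\cap\bigcap_{i=1}^nD(A_i)$. (i) Suppose $(S(v))_{v\in\mathbb N_0}$ is a discrete $(k,C,B,(A_i)_{1\le i\le n})$-existence family such that $S(0)Bx=BS(0)x$ and $S(0)A_ix=A_iS(0)x$ for all $x\in D(B)\cap D(A_1)\cap\dots\cap D(A_n)$ and all $i$. Then $T$ is injective, $R(C)\subseteq R(T)$, $T^{-1}C\in L(X)$, $S(0)=k(0)T^{-1}C$, $$S(v)x=T^{-1}\Bigl[k(v)Cx+\sum_{i=1}^{n}A_i\sum_{j=0}^{v-1}a_i(v-j)S(j)x\Bigr],\quad v\in\mathbb N,\ x\in X,\qquad(\dagger)$$ and for all $i$ and $v\in\mathbb N_0$ one has $S(v)X\subseteq D(A_i)$ and $A_iS(v)\in L(X)$. (ii) Suppose $T$ is injective, $R(C)\subseteq R(T)$, $T^{-1}C\in L(X)$, and for every $l\in\mathbb N$ and every choice $i_1,\dots,i_l\in\{1,\dots,n\}$ the operator $T^{-1}A_{i_1}T^{-1}A_{i_2}\cdots T^{-1}A_{i_l}T^{-1}C$ is defined on all of $X$ and belongs to $L(X)$. Define $S(0):=k(0)T^{-1}C$ and $S(v)$, $v\in\mathbb N$,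 recursively by $(\dagger)$. Then $(S(v))_{v\in\mathbb N_0}\subseteq L(X)$ is well defined, $A_iS(v)\in L(X)$ for all $i$ and $v$, and $(S(v))_{v\in\mathbb N_0}$ is the unique discrete $(k,C,B,(A_i)_{1\le i\le n})$-existence family. Furthermore: if $\mathcal I\subseteq\{1,\dots,n\}$ and (U1) $CB\subseteq BC$ and $CA_i\subseteq A_iC$ for all $i\notin\mathcal I$; (U2) for all $i\notin\mathcal I$ and $x\in D(A_i)\cap D(B)$: $Bx\in D(A_i)$, $A_ix\in D(B)$ and $A_iBx=BA_ix$; (U3) for all $i\notin\mathcal I$, $j\in\{1,\dots,n\}$ and $x\in D(A_i)\cap D(A_j)$: $A_jx\in D(A_i)$, $A_ix\in D(A_j)$ and $A_iA_jx=A_jA_ix$, then $(S(v))$ is a discrete $(k,C,B,(A_i)_{1\le i\le n},\mathcal I)$-existence family; and if there exist a closed linear operator $A$ with $CA\subseteq AC$ and complex polynomials $P_B,P_1,\dots,P_n$ with $B=P_B(A)$, $A_i=P_i(A)$ ($1\le i\le n$), then $(S(v))$ is a discrete $(k,C,B,(A_i)_{1\le i\le n},\emptyset)$-existence family. (iii) Suppose $C=\mathrm I$, $T^{-1}\in L(X)$, $\sum_{v=0}^\infty|a_i(v)|<\infty$ for $1\le i\le n$, $\sum_{v=0}^\infty|k(v)|<\infty$, and either (a) $A_i\in L(X)$ for $1\le i\le n$ and $1>\sum_{i=1}^{n}\sum_{v=1}^{\infty}|a_i(v)|\,\|T^{-1}A_i\|$; or (b) either (U1)–(U3) hold with $\mathcal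 I=\emptyset$, or there exist a closed linear operator $A$ and complex polynomials $P_B,P_1,\dots,P_n$ with $B=P_B(A)$, $A_i=P_i(A)$; and $1>\sum_{i=1}^{n}\sum_{v=1}^{\infty}|a_i(v)|\,\|A_iT^{-1}\|$. Then the hypotheses of (ii) hold, and the family $(S(v))$ of (ii) satisfies $\sum_{v=0}^\infty\|S(v)\|<\infty$ and $\sum_{v=0}^\infty\|A_i(a_i\ast_0S)(v)\|<\infty$ for $1\le i\le n$; if (b) holds, then in addition $\sum_{v=0}^\infty\|A_iS(v)\|<\infty$ for $1\le i\le n$.
   Context: $L(X)$ is the space of bounded linear operators on $X$; $R(\cdot)$ denotes range. For sequences, $(a\ast_0 S)(v):=\sum_{j=0}^{v}a(v-j)S(j)$. A family $(S(v))_{v\in\mathbb N_0}\subseteq L(X)$ is a discrete $(k,C,B,(A_i)_{1\le i\le n})$-existence family if for every $v\in\mathbb N_0$, $i\in\{1,\dots,n\}$ and $x\in X$: $(a_i\ast_0S)(v)x\in D(A_i)$, the map $x\mapsto A_i(a_i\ast_0S)(v)x$ belongs to $L(X)$, $S(v)x\in D(B)$, and $BS(v)x=k(v)Cx+\sum_{i=1}^nA_i(a_i\ast_0S)(v)x$. For $\mathcal I\subseteq\{1,\dots,n\}$ it is a discrete $(k,C,B,(A_i)_{1\le i\le n},\mathcal I)$-existence family if moreover $S(v)A_i\subseteq A_iS(v)$ (i.e. for $x\in D(A_i)$: $S(v)x\in D(A_i)$ and $A_iS(v)x=S(v)A_ix$) for all $v\in\mathbb N_0$ and $i\notin\mathcal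 I$. "$A_iS(v)\in L(X)$" means $S(v)X\subseteq D(A_i)$ and $A_iS(v)$ is bounded. For a polynomial $P$ and closed $A$, $P(A)$ is the usual polynomial operator on $D(A^{\deg P})$. *)

theory Defs
  imports "HOL-Analysis.Analysis" "HOL-Computational_Algebra.Polynomial"
begin

text \<open>The library only has real normed spaces; a complex Banach space is a real Banach
  space with a compatible complex scalar multiplication.\<close>

class complex_banach = banach +
  fixes scaleC :: "complex \<Rightarrow> 'a \<Rightarrow> 'a" (infixr \<open>*\<^sub>C\<close> 75)
  assumes scaleC_add_right: "c *\<^sub>C (x + y) = c *\<^sub>C x + c *\<^sub>C y"
    and scaleC_add_left: "(c + d) *\<^sub>C x = c *\<^sub>C x + d *\<^sub>C x"
    and scaleC_scaleC: "c *\<^sub>C (d *\<^sub>C x) = (c * d) *\<^sub>C x"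
    and scaleC_one: "1 *\<^sub>C x = x"
    and scaleR_scaleC: "r *\<^sub>R x = complex_of_real r *\<^sub>C x"
    and norm_scaleC: "norm (c *\<^sub>C x) = cmod c * norm x"

definition bounded_clinear :: "('a::complex_banach \<Rightarrow> 'a) \<Rightarrow> bool" where
  "bounded_clinear f \<longleftrightarrow> bounded_linear f \<and> (\<forall>c x. f (c *\<^sub>C x) = c *\<^sub>C f x)"

text \<open>A (possibly unbounded) linear operator is a pair: domain D and action f on D.\<close>
definition clinear_op :: "'a::complex_banach set \<Rightarrow> ('a \<Rightarrow> 'a) \<Rightarrow> bool" where
  "clinear_op D f \<longleftrightarrow> 0 \<in> D \<and> (\<forall>x\<in>D. \<forall>y\<in>D. x + y \<in> D \<and> f (x + y) = f x + f y)
      \<and> (\<forall>c. \<forall>x\<in>D. c *\<^sub>C x \<in> D \<and> f (c *\<^sub>C x) = c *\<^sub>C f x)"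

definition closed_op :: "'a::complex_banach set \<Rightarrow> ('a \<Rightarrow> 'a) \<Rightarrow> bool" where
  "closed_op D f \<longleftrightarrow> clinear_op D f \<and> closed ((\<lambda>x. (x, f x)) ` D)"

definition Tdom :: "'a set \<Rightarrow> (nat \<Rightarrow> 'a set) \<Rightarrow> nat \<Rightarrow> 'a set" where
  "Tdom DB DA n = DB \<inter> (\<Inter>i\<in>{1..n}. DA i)"

definition Top :: "('a::complex_banach \<Rightarrow> 'a) \<Rightarrow> (nat \<Rightarrow> 'a \<Rightarrow> 'a) \<Rightarrow> (nat \<Rightarrow> nat \<Rightarrow> complex)
    \<Rightarrow> nat \<Rightarrow> 'a \<Rightarrow> 'a" where
  "Top B A a n x = B x - (\<Sum>i=1..n. a i 0 *\<^sub>C A i x)"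

text \<open>T^{-1} (meaningful on the range of T when T is injective on its domain).\<close>
definition Tinv :: "'a set \<Rightarrow> (nat \<Rightarrow> 'a set) \<Rightarrow> ('a::complex_banach \<Rightarrow> 'a) \<Rightarrow> (nat \<Rightarrow> 'a \<Rightarrow> 'a)
    \<Rightarrow> (nat \<Rightarrow> nat \<Rightarrow> complex) \<Rightarrow> nat \<Rightarrow> 'a \<Rightarrow> 'a" where
  "Tinv DB DA B A a n = the_inv_into (Tdom DB DA n) (Top B A a n)"

definition conv0 :: "(nat \<Rightarrow> complex) \<Rightarrow> (nat \<Rightarrow> 'a \<Rightarrow> 'a::complex_banach) \<Rightarrow> nat \<Rightarrow> 'a \<Rightarrow> 'a" where
  "conv0 a S v x = (\<Sum>j=0..v. a (v - j) *\<^sub>C S j x)"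

definition tail_sum :: "(nat \<Rightarrow> complex) \<Rightarrow> (nat \<Rightarrow> 'a \<Rightarrow> 'a::complex_banach) \<Rightarrow> nat \<Rightarrow> 'a \<Rightarrow> 'a" where
  "tail_sum a S v x = (\<Sum>j<v. a (v - j) *\<^sub>C S j x)"

definition rec_rhs :: "(nat \<Rightarrow> complex) \<Rightarrow> ('a \<Rightarrow> 'a::complex_banach) \<Rightarrow> (nat \<Rightarrow> 'a \<Rightarrow> 'a)
    \<Rightarrow> (nat \<Rightarrow> nat \<Rightarrow> complex) \<Rightarrow> nat \<Rightarrow> (nat \<Rightarrow> 'a \<Rightarrow> 'a) \<Rightarrow> nat \<Rightarrow> 'a \<Rightarrow> 'a" where
  "rec_rhs k C A a n S v x = k v *\<^sub>C C x + (\<Sum>i=1..n. A i (tail_sum (a i) S v x))"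

definition disc_exist_fam ::
  "(nat \<Rightarrow> complex) \<Rightarrow> ('a::complex_banach \<Rightarrow> 'a) \<Rightarrow> 'a set \<Rightarrow> ('a \<Rightarrow> 'a)
   \<Rightarrow> (nat \<Rightarrow> 'a set) \<Rightarrow> (nat \<Rightarrow> 'a \<Rightarrow> 'a) \<Rightarrow> (nat \<Rightarrow> nat \<Rightarrow> complex) \<Rightarrow> nat
   \<Rightarrow> (nat \<Rightarrow> 'a \<Rightarrow> 'a) \<Rightarrow> bool" where
  "disc_exist_fam k C DB B DA A a n S \<longleftrightarrow>
     (\<forall>v. bounded_clinear (S v)) \<and>
     (\<forall>v. \<forall>i\<in>{1..n}. (\<forall>x. conv0 (a i) S v x \<in> DA i)
                      \<and> bounded_clinear (\<lambda>x. A i (conv0 (a i) S v x))) \<and>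
     (\<forall>v x. S v x \<in> DB \<and>
            B (S v x) = k v *\<^sub>C C x + (\<Sum>i=1..n. A i (conv0 (a i) S v x)))"

definition disc_exist_fam_I ::
  "(nat \<Rightarrow> complex) \<Rightarrow> ('a::complex_banach \<Rightarrow> 'a) \<Rightarrow> 'a set \<Rightarrow> ('a \<Rightarrow> 'a)
   \<Rightarrow> (nat \<Rightarrow> 'a set) \<Rightarrow> (nat \<Rightarrow> 'a \<Rightarrow> 'a) \<Rightarrow> (nat \<Rightarrow> nat \<Rightarrow> complex) \<Rightarrow> nat
   \<Rightarrow> nat set \<Rightarrow> (nat \<Rightarrow> 'a \<Rightarrow> 'a) \<Rightarrow> bool" where
  "disc_exist_fam_I k C DB B DA A a n I S \<longleftrightarrow>
     disc_exist_fam k C DB B DA A a n S \<and>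
     (\<forall>v. \<forall>i\<in>{1..n} - I. \<forall>x\<in>DA i. S v x \<in> DA i \<and> A i (S v x) = S v (A i x))"

fun opchain :: "('a \<Rightarrow> 'a) \<Rightarrow> ('a \<Rightarrow> 'a) \<Rightarrow> (nat \<Rightarrow> 'a \<Rightarrow> 'a) \<Rightarrow> nat list \<Rightarrow> 'a \<Rightarrow> 'a" where
  "opchain Ti C A [] x = Ti (C x)"
| "opchain Ti C A (i # is) x = Ti (A i (opchain Ti C A is x))"

fun chain_defined :: "'a set \<Rightarrow> ('a \<Rightarrow> 'a) \<Rightarrow> ('a \<Rightarrow> 'a) \<Rightarrow> ('a \<Rightarrow> 'a) \<Rightarrow> (nat \<Rightarrow> 'a set)
    \<Rightarrow> (nat \<Rightarrow> 'a \<Rightarrow> 'a) \<Rightarrow> nat list \<Rightarrow> 'a \<Rightarrow> bool" where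
  "chain_defined DT T Ti C DA A [] x \<longleftrightarrow> C x \<in> T ` DT"
| "chain_defined DT T Ti C DA A (i # is) x \<longleftrightarrow> chain_defined DT T Ti C DA A is x
      \<and> opchain Ti C A is x \<in> DA i \<and> A i (opchain Ti C A is x) \<in> T ` DT"

definition op_commutes_bdd :: "('a \<Rightarrow> 'a) \<Rightarrow> 'a set \<Rightarrow> ('a \<Rightarrow> 'a) \<Rightarrow> bool" where
  \<comment> \<open>C F \<subseteq> F C for bounded C and operator (D, F)\<close>
  "op_commutes_bdd C D F \<longleftrightarrow> (\<forall>x\<in>D. C x \<in> D \<and> F (C x) = C (F x))"

definition U1 :: "('a \<Rightarrow> 'a) \<Rightarrow> 'a set \<Rightarrow> ('a \<Rightarrow> 'a) \<Rightarrow> (nat \<Rightarrow> 'a set) \<Rightarrow> (nat \<Rightarrow> 'a \<Rightarrow> 'a)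
    \<Rightarrow> nat \<Rightarrow> nat set \<Rightarrow> bool" where
  "U1 C DB B DA A n I \<longleftrightarrow> op_commutes_bdd C DB B \<and> (\<forall>i\<in>{1..n} - I. op_commutes_bdd C (DA i) (A i))"

definition U2 :: "'a set \<Rightarrow> ('a \<Rightarrow> 'a) \<Rightarrow> (nat \<Rightarrow> 'a set) \<Rightarrow> (nat \<Rightarrow> 'a \<Rightarrow> 'a)
    \<Rightarrow> nat \<Rightarrow> nat set \<Rightarrow> bool" where
  "U2 DB B DA A n I \<longleftrightarrow> (\<forall>i\<in>{1..n} - I. \<forall>x\<in>DA i \<inter> DB.
      B x \<in> DA i \<and> A i x \<in> DB \<and> A i (B x) = B (A i x))"

definition U3 :: "(nat \<Rightarrow> 'a set) \<Rightarrow> (nat \<Rightarrow> 'a \<Rightarrow> 'a) \<Rightarrow> nat \<Rightarrow> nat set \<Rightarrow> bool" where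
  "U3 DA A n I \<longleftrightarrow> (\<forall>i\<in>{1..n} - I. \<forall>j\<in>{1..n}. \<forall>x\<in>DA i \<inter> DA j.
      A j x \<in> DA i \<and> A i x \<in> DA j \<and> A i (A j x) = A j (A i x))"

text \<open>P(A) with domain D(A^{deg P}) = {x. A^j x \<in> D(A) for j < deg P}.\<close>
definition poly_op_dom :: "'a set \<Rightarrow> ('a \<Rightarrow> 'a) \<Rightarrow> complex poly \<Rightarrow> 'a set" where
  "poly_op_dom D f P = {x. \<forall>j<degree P. (f ^^ j) x \<in> D}"

definition poly_op_fun :: "('a::complex_banach \<Rightarrow> 'a) \<Rightarrow> complex poly \<Rightarrow> 'a \<Rightarrow> 'a" where
  "poly_op_fun f P x = (\<Sum>j\<le>degree P. coeff P j *\<^sub>C (f ^^ j) x)"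

definition is_poly_of :: "'a set \<Rightarrow> ('a::complex_banach \<Rightarrow> 'a) \<Rightarrow> 'a set \<Rightarrow> ('a \<Rightarrow> 'a)
    \<Rightarrow> complex poly \<Rightarrow> bool" where
  "is_poly_of DF F D f P \<longleftrightarrow> DF = poly_op_dom D f P \<and> (\<forall>x\<in>DF. F x = poly_op_fun f P x)"

definition poly_of_common_op :: "'a set \<Rightarrow> ('a::complex_banach \<Rightarrow> 'a) \<Rightarrow> (nat \<Rightarrow> 'a set)
    \<Rightarrow> (nat \<Rightarrow> 'a \<Rightarrow> 'a) \<Rightarrow> nat \<Rightarrow> 'a set \<Rightarrow> ('a \<Rightarrow> 'a) \<Rightarrow> bool" where
  "poly_of_common_op DB B DA A n D0 A0 \<longleftrightarrow>
     (\<exists>PB P. is_poly_of DB B D0 A0 PB \<and> (\<forall>i\<in>{1..n}. is_poly_of (DA i) (A i) D0 A0 (P i)))"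

definition hyp_ii :: "('a::complex_banach \<Rightarrow> 'a) \<Rightarrow> 'a set \<Rightarrow> ('a \<Rightarrow> 'a) \<Rightarrow> (nat \<Rightarrow> 'a set)
    \<Rightarrow> (nat \<Rightarrow> 'a \<Rightarrow> 'a) \<Rightarrow> (nat \<Rightarrow> nat \<Rightarrow> complex) \<Rightarrow> nat \<Rightarrow> bool" where
  "hyp_ii C DB B DA A a n \<longleftrightarrow>
     inj_on (Top B A a n) (Tdom DB DA n) \<and>
     range C \<subseteq> Top B A a n ` Tdom DB DA n \<and>
     bounded_clinear (\<lambda>x. Tinv DB DA B A a n (C x)) \<and>
     (\<forall>is. is \<noteq> [] \<and> set is \<subseteq> {1..n} \<longrightarrow>
        (\<forall>x. chain_defined (Tdom DB DA n) (Top B A a n) (Tinv DB DA B A a n) C DA A is x) \<and>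
        bounded_clinear (opchain (Tinv DB DA B A a n) C A is))"

definition S_rec :: "(nat \<Rightarrow> complex) \<Rightarrow> ('a::complex_banach \<Rightarrow> 'a) \<Rightarrow> 'a set \<Rightarrow> ('a \<Rightarrow> 'a)
    \<Rightarrow> (nat \<Rightarrow> 'a set) \<Rightarrow> (nat \<Rightarrow> 'a \<Rightarrow> 'a) \<Rightarrow> (nat \<Rightarrow> nat \<Rightarrow> complex) \<Rightarrow> nat
    \<Rightarrow> (nat \<Rightarrow> 'a \<Rightarrow> 'a) \<Rightarrow> bool" where
  "S_rec k C DB B DA A a n S \<longleftrightarrow>
     S 0 = (\<lambda>x. k 0 *\<^sub>C Tinv DB DA B A a n (C x)) \<and>
     (\<forall>v\<ge>1. S v = (\<lambda>x. Tinv DB DA B A a n (rec_rhs k C A a n S v x)))"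

end

theory Submission
  imports Defs
begin

section \<open>Closed graph theorem\<close>

lemma cgt_step1:
  fixes f :: "'a::banach \<Rightarrow> 'b::banach"
  assumes lin: "linear f"
  obtains N r where "r > 0" "N \<ge> 0"
    "\<And>y e. norm y < r \<Longrightarrow> e > 0 \<Longrightarrow> \<exists>z. norm (f z) \<le> N \<and> norm (y - z) < e"
proof -
  define K where "K n = closure {x. norm (f x) \<le> real n}" for n :: nat
  have cov: "\<Union>(range K) = UNIV"
  proof safe
    fix x :: 'a
    obtain n :: nat where "norm (f x) \<le> real n" using real_arch_simple by blast
    then show "x \<in> \<Union>(range K)" unfolding K_def using closure_subset by fastforce
  qed auto
  have "\<exists>n. interior (K n) \<noteq> {}"
  proof (rule ccontr)
    assume "\<not> ?thesis"
    then have "\<And>T. T \<in> range K \<Longrightarrow> closedin euclidean T \<and> euclidean interior_of T = {}"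
      by (auto simp: K_def)
    then have "euclidean interior_of \<Union>(range K) = {}"
      by (intro Baire_category_alt) (auto simp: completely_metrizable_space_euclidean)
    then show False using cov by simp
  qed
  then obtain n x0 where "x0 \<in> interior (K n)" by blast
  then obtain r where r: "r > 0" "ball x0 r \<subseteq> K n"
    by (meson open_contains_ball_eq open_interior interior_subset subset_trans)
  show ?thesis
  proof (rule that[of r "real n"])
    fix y :: 'a and e :: real
    assume y: "norm y < r" and e: "e > 0"
    have "x0 + y \<in> K n" "x0 - y \<in> K n" using y r by (auto simp: dist_norm)
    then obtain z1 z2 where z1: "norm (f z1) \<le> real n" "dist z1 (x0 + y) < e"
      and z2: "norm (f z2) \<le> real n" "dist z2 (x0 - y) < e"
      unfolding K_def closure_approachable using e by blast
    define z where "z = (1/2) *\<^sub>R (z1 - z2)"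
    have "f z = (1/2) *\<^sub>R (f z1 - f z2)" unfolding z_def using lin
      by (simp add: linear_scale linear_diff)
    then have "norm (f z) \<le> (1/2) * (norm (f z1) + norm (f z2))"
      by (simp add: norm_triangle_ineq4)
    also have "\<dots> \<le> real n" using z1 z2 by simp
    finally have 1: "norm (f z) \<le> real n" .
    have "(x0 + y - z1) - (x0 - y - z2) = 2 *\<^sub>R (y - z)"
      unfolding z_def by (simp add: algebra_simps) (simp add: scaleR_2)
    then have "y - z = (1/2) *\<^sub>R ((x0 + y - z1) - (x0 - y - z2))" by simp
    then have "norm (y - z) = (1/2) * norm ((x0 + y - z1) - (x0 - y - z2))" by simp
    also have "\<dots> \<le> (1/2) * (norm (x0 + y - z1) + norm (x0 - y - z2))"
      by (intro mult_left_mono norm_triangle_ineq4) auto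
    also have "\<dots> < e" using z1 z2 by (simp add: dist_norm norm_minus_commute)
    finally have 2: "norm (y - z) < e" .
    show "\<exists>z. norm (f z) \<le> real n \<and> norm (y - z) < e"
      by (rule exI[of _ z]) (use 1 2 in simp)
  qed (use r(1) in simp_all)
qed

lemma cgt_step2:
  fixes f :: "'a::banach \<Rightarrow> 'b::banach"
  assumes lin: "linear f"
  obtains M where "M \<ge> 0" "\<And>y e. e > 0 \<Longrightarrow> \<exists>z. norm (f z) \<le> M * norm y \<and> norm (y - z) < e"
proof -
  obtain r N where r: "r > 0" "N \<ge> 0"
    and P: "\<And>y e. norm y < r \<Longrightarrow> e > 0 \<Longrightarrow> \<exists>z. norm (f z) \<le> N \<and> norm (y - z) < e"
    using cgt_step1[OF lin] by metis
  show ?thesis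
  proof (rule that[of "2 * N / r"])
    show "0 \<le> 2 * N / r" using r by simp
    fix y :: 'a and e :: real assume e: "e > 0"
    show "\<exists>z. norm (f z) \<le> 2 * N / r * norm y \<and> norm (y - z) < e"
    proof (cases "y = 0")
      case True then show ?thesis using e lin by (intro exI[of _ 0]) (simp add: linear_0)
    next
      case False
      define t where "t = 2 * norm y / r"
      have t: "t > 0" using False r by (simp add: t_def)
      have "norm ((1/t) *\<^sub>R y) = r / 2" using t False r by (simp add: t_def)
      then have "norm ((1/t) *\<^sub>R y) < r" using r by simp
      then obtain z where z: "norm (f z) \<le> N" "norm ((1/t) *\<^sub>R y - z) < e / t"
        using P[OF _ divide_pos_pos[OF e t]] by blast
      have "f (t *\<^sub>R z) = t *\<^sub>R f z" using lin by (simp add: linear_scale)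
      then have "norm (f (t *\<^sub>R z)) = t * norm (f z)" using t by simp
      also have "\<dots> \<le> t * N" using z t by simp
      also have "\<dots> = 2 * N / r * norm y" by (simp add: t_def)
      finally have 1: "norm (f (t *\<^sub>R z)) \<le> 2 * N / r * norm y" .
      have "y - t *\<^sub>R z = t *\<^sub>R ((1/t) *\<^sub>R y - z)" using t by (simp add: algebra_simps)
      then have "norm (y - t *\<^sub>R z) = t * norm ((1/t) *\<^sub>R y - z)" using t by simp
      also have "\<dots> < t * (e / t)" using z t by (intro mult_strict_left_mono) auto
      also have "\<dots> = e" using t by simp
      finally show ?thesis using 1 by blast
    qed
  qed
qed

lemma closed_graph_bounded:
  fixes f :: "'a::banach \<Rightarrow> 'b::banach"
  assumes lin: "linear f" and cl: "closed (range (\<lambda>x. (x, f x)))"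
  shows "bounded_linear f"
proof -
  obtain M where M: "M \<ge> 0" and P: "\<And>y e. e > 0 \<Longrightarrow> \<exists>z. norm (f z) \<le> M * norm y \<and> norm (y - z) < e"
    using cgt_step2[OF lin] by metis
  define g where "g y e = (SOME z. norm (f z) \<le> M * norm y \<and> norm (y - z) < e)" for y e
  have g: "norm (f (g y e)) \<le> M * norm y \<and> norm (y - g y e) < e" if "e > 0" for y e
    unfolding g_def by (rule someI_ex) (use P that in blast)
  have bnd: "norm (f x) \<le> norm x * (2 * M)" for x
  proof (cases "x = 0")
    case True then show ?thesis using lin by (simp add: linear_0)
  next
    case False
    define eps where "eps k = norm x / 2 ^ Suc k" for k :: nat
    have eps: "eps k > 0" for k using False by (simp add: eps_def)
    define u where "u = rec_nat x (\<lambda>k uk. uk - g uk (eps k))"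
    have u0: "u 0 = x" and uS: "u (Suc k) = u k - g (u k) (eps k)" for k by (simp_all add: u_def)
    define z where "z k = g (u k) (eps k)" for k
    have unorm: "norm (u k) \<le> norm x / 2 ^ k" for k
    proof (cases k)
      case 0 then show ?thesis by (simp add: u0)
    next
      case (Suc j)
      have "norm (u (Suc j)) < eps j" using g[OF eps, of "u j" j] by (simp add: uS)
      then show ?thesis using Suc by (simp add: eps_def)
    qed
    have fz: "norm (f (z k)) \<le> M * norm x * (1/2) ^ k" for k
    proof -
      have "norm (f (z k)) \<le> M * norm (u k)" using g[OF eps, of "u k" k] by (simp add: z_def)
      also have "\<dots> \<le> M * (norm x / 2 ^ k)" using unorm M by (intro mult_left_mono) auto
      also have "\<dots> = M * norm x * (1/2) ^ k" by (simp add: power_one_over)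
      finally show ?thesis .
    qed
    have geo: "summable (\<lambda>k. M * norm x * (1/2::real) ^ k)"
      by (intro summable_mult summable_geometric) simp
    have sumfz: "summable (\<lambda>k. f (z k))"
      by (rule summable_comparison_test[OF _ geo]) (use fz in auto)
    have sumn: "summable (\<lambda>k. norm (f (z k)))"
      by (rule summable_comparison_test[OF _ geo]) (use fz in auto)
    have uS': "u (Suc k) = u k - z k" for k by (simp add: uS z_def)
    have partial: "(\<Sum>k<m. z k) = x - u m" for m
      by (induction m) (simp_all add: u0 uS')
    have ulim: "u \<longlonglongrightarrow> 0"
    proof (rule tendsto_norm_zero_cancel)
      have t0: "(\<lambda>k. norm x * (1/2::real) ^ k) \<longlonglongrightarrow> 0"
        using tendsto_mult[OF tendsto_const[of "norm x"] LIMSEQ_power_zero[of "1/2::real"]] by simp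
      have ev: "\<forall>\<^sub>F k in sequentially. norm (norm (u k)) \<le> norm x * (1/2::real) ^ k"
        by (rule always_eventually) (use unorm in \<open>simp add: power_one_over\<close>)
      show "(\<lambda>k. norm (u k)) \<longlonglongrightarrow> 0"
        by (rule Lim_null_comparison[OF ev t0])
    qed
    have l1: "(\<lambda>m. x - u m) \<longlonglongrightarrow> x"
      using tendsto_diff[OF tendsto_const[of x] ulim] by simp
    have l2: "(\<lambda>m. f (x - u m)) \<longlonglongrightarrow> suminf (\<lambda>k. f (z k))"
    proof -
      have "f (x - u m) = (\<Sum>k<m. f (z k))" for m
        unfolding partial[symmetric] using lin by (simp add: linear_sum)
      then show ?thesis using summable_LIMSEQ[OF sumfz] by simp
    qed
    have "(x, suminf (\<lambda>k. f (z k))) \<in> range (\<lambda>x. (x, f x))"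
    proof (rule closed_sequentially[OF cl])
      show "(\<lambda>m. (x - u m, f (x - u m))) \<longlonglongrightarrow> (x, suminf (\<lambda>k. f (z k)))"
        by (rule tendsto_Pair[OF l1 l2])
    qed auto
    then have fx: "f x = suminf (\<lambda>k. f (z k))" by auto
    have "norm (f x) \<le> (\<Sum>k. norm (f (z k)))" unfolding fx by (rule summable_norm[OF sumn])
    also have "\<dots> \<le> (\<Sum>k. M * norm x * (1/2) ^ k)" by (rule suminf_le[OF fz sumn geo])
    also have "\<dots> = M * norm x * 2" by (simp add: suminf_mult suminf_geometric)
    finally show ?thesis by (simp add: mult_ac)
  qed
  show ?thesis
    by (rule bounded_linear_intro[of f "2 * M"]) (simp_all add: linear_add[OF lin] linear_scale[OF lin] bnd)
qed

declare scaleC_one[simp]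

lemma scaleC_zero_left[simp]: "0 *\<^sub>C x = (0::'a::complex_banach)"
proof -
  have "0 *\<^sub>C x = 0 *\<^sub>C x + 0 *\<^sub>C x" using scaleC_add_left[of 0 0 x] by simp
  then show ?thesis by simp
qed

lemma scaleC_zero_right[simp]: "c *\<^sub>C (0::'a::complex_banach) = 0"
proof -
  have "c *\<^sub>C (0::'a) = c *\<^sub>C 0 + c *\<^sub>C 0" using scaleC_add_right[of c "0::'a" 0] by simp
  then show ?thesis by simp
qed

lemma scaleC_minus_left: "(- c) *\<^sub>C x = - (c *\<^sub>C (x::'a::complex_banach))"
proof -
  have "c *\<^sub>C x + (- c) *\<^sub>C x = 0" using scaleC_add_left[of c "-c" x] by simp
  then show ?thesis by (simp add: eq_neg_iff_add_eq_0 add.commute)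
qed

lemma scaleC_minus_right: "c *\<^sub>C (- x) = - (c *\<^sub>C (x::'a::complex_banach))"
proof -
  have "c *\<^sub>C x + c *\<^sub>C (- x) = 0" using scaleC_add_right[of c x "-x"] by simp
  then show ?thesis by (simp add: eq_neg_iff_add_eq_0 add.commute)
qed

lemma neg_scaleC: "- x = (-1) *\<^sub>C (x::'a::complex_banach)"
  by (simp add: scaleC_minus_left)

lemma scaleC_diff_right: "c *\<^sub>C (x - y) = c *\<^sub>C x - c *\<^sub>C (y::'a::complex_banach)"
  using scaleC_add_right[of c x "-y"] by (simp add: scaleC_minus_right)

lemma scaleC_diff_left: "(c - d) *\<^sub>C x = c *\<^sub>C x - d *\<^sub>C (x::'a::complex_banach)"
  using scaleC_add_left[of c "-d" x] by (simp add: scaleC_minus_left)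

lemma scaleC_sum_right: "c *\<^sub>C (\<Sum>j\<in>J. g j) = (\<Sum>j\<in>J. c *\<^sub>C (g j::'a::complex_banach))"
  by (induction J rule: infinite_finite_induct) (simp_all add: scaleC_add_right)

lemma scaleC_sum_left: "(\<Sum>j\<in>J. g j) *\<^sub>C x = (\<Sum>j\<in>J. g j *\<^sub>C (x::'a::complex_banach))"
  by (induction J rule: infinite_finite_induct) (simp_all add: scaleC_add_left)

lemma scaleC_eq_0_iff[simp]: "c *\<^sub>C x = 0 \<longleftrightarrow> c = 0 \<or> (x::'a::complex_banach) = 0"
proof -
  have "c *\<^sub>C x = 0 \<longleftrightarrow> norm (c *\<^sub>C x) = 0" by simp
  then show ?thesis by (simp add: norm_scaleC)
qed

lemma scaleC_inv_cancel[simp]: "c \<noteq> 0 \<Longrightarrow> inverse c *\<^sub>C (c *\<^sub>C x) = (x::'a::complex_banach)"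
  by (simp add: scaleC_scaleC)

lemma scaleC_inv_cancel2[simp]: "c \<noteq> 0 \<Longrightarrow> c *\<^sub>C (inverse c *\<^sub>C x) = (x::'a::complex_banach)"
  by (simp add: scaleC_scaleC)

lemma scaleC_left_imp_eq: "c \<noteq> 0 \<Longrightarrow> c *\<^sub>C x = c *\<^sub>C y \<Longrightarrow> x = (y::'a::complex_banach)"
  by (metis scaleC_inv_cancel)

lemma bcl_intro:
  fixes f :: "'a::complex_banach \<Rightarrow> 'a"
  assumes "\<And>x y. f (x + y) = f x + f y" "\<And>c x. f (c *\<^sub>C x) = c *\<^sub>C f x"
    "\<And>x. norm (f x) \<le> norm x * K"
  shows "bounded_clinear f"
  unfolding bounded_clinear_def
proof (intro conjI allI)
  show "bounded_linear f"
    by (rule bounded_linear_intro[of f K]) (simp_all add: assms scaleR_scaleC)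
qed (rule assms)

lemma bcl_bl: "bounded_clinear f \<Longrightarrow> bounded_linear f"
  by (simp add: bounded_clinear_def)

lemma bcl_add: "bounded_clinear f \<Longrightarrow> f (x + y) = f x + f y"
  unfolding bounded_clinear_def by (simp add: linear_simps)

lemma bcl_scaleC: "bounded_clinear f \<Longrightarrow> f (c *\<^sub>C x) = c *\<^sub>C f x"
  unfolding bounded_clinear_def by blast

lemma bcl_0: "bounded_clinear f \<Longrightarrow> f 0 = 0"
  unfolding bounded_clinear_def by (simp add: linear_simps)

lemma bcl_minus: "bounded_clinear f \<Longrightarrow> f (- x) = - f x"
  unfolding bounded_clinear_def by (simp add: linear_simps)

lemma bcl_diff: "bounded_clinear f \<Longrightarrow> f (x - y) = f x - f y"
  unfolding bounded_clinear_def by (simp add: linear_simps)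

lemma bcl_sum: "bounded_clinear f \<Longrightarrow> f (\<Sum>j\<in>J. g j) = (\<Sum>j\<in>J. f (g j))"
  by (induction J rule: infinite_finite_induct) (simp_all add: bcl_add bcl_0)

lemma bcl_bound: "bounded_clinear f \<Longrightarrow> \<exists>K>0. \<forall>x. norm (f x) \<le> norm x * K"
  using bounded_linear.pos_bounded bcl_bl by blast

lemma bcl_onorm: "bounded_clinear f \<Longrightarrow> norm (f x) \<le> onorm f * norm x"
  using onorm bcl_bl by blast

lemma bcl_id: "bounded_clinear (\<lambda>x. x)"
  by (rule bcl_intro[of _ 1]) auto

lemma bcl_zero: "bounded_clinear (\<lambda>x. 0)"
  by (rule bcl_intro[of _ 0]) auto

lemma bcl_comp:
  assumes "bounded_clinear f" "bounded_clinear g"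
  shows "bounded_clinear (\<lambda>x. f (g x))"
proof -
  obtain K1 where K1: "K1 > 0" "\<And>x. norm (f x) \<le> norm x * K1" using bcl_bound[OF assms(1)] by blast
  obtain K2 where K2: "K2 > 0" "\<And>x. norm (g x) \<le> norm x * K2" using bcl_bound[OF assms(2)] by blast
  show ?thesis
  proof (rule bcl_intro[of _ "K2 * K1"])
    fix x
    have "norm (f (g x)) \<le> norm (g x) * K1" by (rule K1(2))
    also have "\<dots> \<le> norm x * K2 * K1" using K1(1) K2(2) by (intro mult_right_mono) auto
    finally show "norm (f (g x)) \<le> norm x * (K2 * K1)" by (simp add: mult.assoc)
  qed (simp_all add: assms bcl_add bcl_scaleC)
qed

lemma bcl_plus:
  assumes "bounded_clinear f" "bounded_clinear g"
  shows "bounded_clinear (\<lambda>x. f x + g x)"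
proof -
  obtain K1 where K1: "K1 > 0" "\<And>x. norm (f x) \<le> norm x * K1" using bcl_bound[OF assms(1)] by blast
  obtain K2 where K2: "K2 > 0" "\<And>x. norm (g x) \<le> norm x * K2" using bcl_bound[OF assms(2)] by blast
  show ?thesis
  proof (rule bcl_intro[of _ "K1 + K2"])
    fix x
    have "norm (f x + g x) \<le> norm (f x) + norm (g x)" by (rule norm_triangle_ineq)
    also have "\<dots> \<le> norm x * K1 + norm x * K2" using K1(2) K2(2) by (intro add_mono) auto
    finally show "norm (f x + g x) \<le> norm x * (K1 + K2)" by (simp add: distrib_left)
  qed (simp_all add: assms bcl_add bcl_scaleC scaleC_add_right)
qed

lemma bcl_scale:
  assumes "bounded_clinear f"
  shows "bounded_clinear (\<lambda>x. c *\<^sub>C f x)"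
proof -
  obtain K1 where K1: "K1 > 0" "\<And>x. norm (f x) \<le> norm x * K1" using bcl_bound[OF assms(1)] by blast
  show ?thesis
  proof (rule bcl_intro[of _ "cmod c * K1"])
    fix x
    have "norm (c *\<^sub>C f x) = cmod c * norm (f x)" by (rule norm_scaleC)
    also have "\<dots> \<le> cmod c * (norm x * K1)" using K1(2) by (intro mult_left_mono) auto
    finally show "norm (c *\<^sub>C f x) \<le> norm x * (cmod c * K1)" by (simp add: mult_ac)
  qed (simp_all add: assms bcl_add bcl_scaleC scaleC_add_right scaleC_scaleC mult.commute)
qed

lemma bcl_minus_fun:
  assumes "bounded_clinear f" "bounded_clinear g"
  shows "bounded_clinear (\<lambda>x. f x - g x)"
proof -
  have "bounded_clinear (\<lambda>x. f x + (-1) *\<^sub>C g x)" by (intro bcl_plus bcl_scale assms)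
  then show ?thesis by (simp add: scaleC_minus_left)
qed

lemma bcl_sum_fun:
  assumes "\<And>i. i \<in> I \<Longrightarrow> bounded_clinear (g i)"
  shows "bounded_clinear (\<lambda>x. \<Sum>i\<in>I. g i x)"
  using assms
proof (induction I rule: infinite_finite_induct)
  case (infinite A) then show ?case by (simp add: bcl_zero)
next
  case empty then show ?case by (simp add: bcl_zero)
next
  case (insert i F) then show ?case by (simp add: bcl_plus)
qed

lemma bcl_cong: "bounded_clinear f \<Longrightarrow> (\<And>x. f x = g x) \<Longrightarrow> bounded_clinear g"
proof -
  assume "bounded_clinear f" "\<And>x. f x = g x"
  then have "f = g" by auto
  then show ?thesis using \<open>bounded_clinear f\<close> by simp
qed

definition csub :: "'a::complex_banach set \<Rightarrow> bool" where
  "csub D \<longleftrightarrow> 0 \<in> D \<and> (\<forall>x\<in>D. \<forall>y\<in>D. x + y \<in> D) \<and> (\<forall>c. \<forall>x\<in>D. c *\<^sub>C x \<in> D)"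

lemma csub_0: "csub D \<Longrightarrow> 0 \<in> D" by (simp add: csub_def)
lemma csub_add: "csub D \<Longrightarrow> x \<in> D \<Longrightarrow> y \<in> D \<Longrightarrow> x + y \<in> D" by (simp add: csub_def)
lemma csub_scale: "csub D \<Longrightarrow> x \<in> D \<Longrightarrow> c *\<^sub>C x \<in> D" by (simp add: csub_def)
lemma csub_neg: "csub D \<Longrightarrow> x \<in> D \<Longrightarrow> - x \<in> D"
  by (subst neg_scaleC) (rule csub_scale)
lemma csub_diff: "csub D \<Longrightarrow> x \<in> D \<Longrightarrow> y \<in> D \<Longrightarrow> x - y \<in> D"
  using csub_add[of D x "-y"] csub_neg[of D y] by simp
lemma csub_sum: "csub D \<Longrightarrow> (\<And>j. j \<in> J \<Longrightarrow> g j \<in> D) \<Longrightarrow> (\<Sum>j\<in>J. g j) \<in> D"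
proof (induction J rule: infinite_finite_induct)
  case (infinite A) then show ?case by (simp add: csub_0)
next
  case empty then show ?case by (simp add: csub_0)
next
  case (insert i F) then show ?case by (simp add: csub_add)
qed
lemma csub_UNIV: "csub UNIV" by (simp add: csub_def)
lemma csub_Int: "csub D \<Longrightarrow> csub E \<Longrightarrow> csub (D \<inter> E)" by (simp add: csub_def)
lemma csub_INT: "(\<And>i. i \<in> I \<Longrightarrow> csub (D i)) \<Longrightarrow> csub (\<Inter>i\<in>I. D i)" by (simp add: csub_def)

lemma clop_csub: "clinear_op D f \<Longrightarrow> csub D"
  by (simp add: clinear_op_def csub_def)

lemma clop_add: "clinear_op D f \<Longrightarrow> x \<in> D \<Longrightarrow> y \<in> D \<Longrightarrow> f (x + y) = f x + f y"
  by (simp add: clinear_op_def)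

lemma clop_scale: "clinear_op D f \<Longrightarrow> x \<in> D \<Longrightarrow> f (c *\<^sub>C x) = c *\<^sub>C f x"
  by (simp add: clinear_op_def)

lemma clop_0: "clinear_op D f \<Longrightarrow> f 0 = 0"
  using clop_scale[of D f 0 0] by (simp add: clinear_op_def)

lemma clop_neg: "clinear_op D f \<Longrightarrow> x \<in> D \<Longrightarrow> f (- x) = - f x"
  by (metis clop_scale neg_scaleC)

lemma clop_diff: "clinear_op D f \<Longrightarrow> x \<in> D \<Longrightarrow> y \<in> D \<Longrightarrow> f (x - y) = f x - f y"
  using clop_add[of D f x "-y"] clop_neg[of D f y] csub_neg[OF clop_csub, of D f y] by simp

lemma clop_sum: "clinear_op D f \<Longrightarrow> (\<And>j. j \<in> J \<Longrightarrow> g j \<in> D) \<Longrightarrow> f (\<Sum>j\<in>J. g j) = (\<Sum>j\<in>J. f (g j))"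
proof (induction J rule: infinite_finite_induct)
  case (infinite A) then show ?case by (simp add: clop_0)
next
  case empty then show ?case by (simp add: clop_0)
next
  case (insert i F)
  have "(\<Sum>j\<in>F. g j) \<in> D" using insert by (intro csub_sum[OF clop_csub[OF insert.prems(1)]]) auto
  then show ?case using insert by (simp add: clop_add)
qed

lemma closed_op_clop: "closed_op D f \<Longrightarrow> clinear_op D f" by (simp add: closed_op_def)

lemma closed_op_comp_bcl:
  assumes cl: "closed_op D F" and g: "bounded_clinear g" and gD: "\<And>x. g x \<in> D"
  shows "bounded_clinear (\<lambda>x. F (g x))"
proof -
  have clop: "clinear_op D F" using cl by (simp add: closed_op_def)
  have add: "F (g (x + y)) = F (g x) + F (g y)" for x y
    using gD by (simp add: bcl_add[OF g] clop_add[OF clop])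
  have sc: "F (g (c *\<^sub>C x)) = c *\<^sub>C F (g x)" for c x
    using gD by (simp add: bcl_scaleC[OF g] clop_scale[OF clop])
  have lin: "linear (\<lambda>x. F (g x))"
    by (rule linearI) (simp_all add: add sc scaleR_scaleC)
  have "closed (range (\<lambda>x. (x, F (g x))))"
  proof (rule closed_sequential_limits[THEN iffD2], intro allI impI, elim conjE)
    fix s l
    assume s: "\<forall>n. s n \<in> range (\<lambda>x. (x, F (g x)))" and l: "s \<longlonglongrightarrow> l"
    define x where "x n = fst (s n)" for n
    have sn: "s n = (x n, F (g (x n)))" for n
    proof -
      have "s n \<in> range (\<lambda>x. (x, F (g x)))" using s by blast
      then obtain y where "s n = (y, F (g y))" by blast
      then show ?thesis by (simp add: x_def)
    qed
    have xl: "x \<longlonglongrightarrow> fst l" unfolding x_def by (rule tendsto_fst[OF l])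
    have yl: "(\<lambda>n. F (g (x n))) \<longlonglongrightarrow> snd l"
      using tendsto_snd[OF l] by (simp add: sn)
    have gl: "(\<lambda>n. g (x n)) \<longlonglongrightarrow> g (fst l)"
      by (rule bounded_linear.tendsto[OF bcl_bl[OF g] xl])
    have "(g (fst l), snd l) \<in> (\<lambda>x. (x, F x)) ` D"
    proof (rule closed_sequentially)
      show "closed ((\<lambda>x. (x, F x)) ` D)" using cl by (simp add: closed_op_def)
      show "\<And>n. (g (x n), F (g (x n))) \<in> (\<lambda>x. (x, F x)) ` D" using gD by auto
      show "(\<lambda>n. (g (x n), F (g (x n)))) \<longlonglongrightarrow> (g (fst l), snd l)"
        by (rule tendsto_Pair[OF gl yl])
    qed
    then have "snd l = F (g (fst l))" by auto
    then show "l \<in> range (\<lambda>x. (x, F (g x)))"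
      by (intro image_eqI[of _ _ "fst l"]) (simp_all add: prod_eq_iff)
  qed
  then have "bounded_linear (\<lambda>x. F (g x))" by (rule closed_graph_bounded[OF lin])
  then show ?thesis unfolding bounded_clinear_def using sc by blast
qed

lemma conv0_split: "conv0 b S v x = b 0 *\<^sub>C S v x + tail_sum b S v x"
  by (simp add: conv0_def tail_sum_def atLeast0AtMost lessThan_Suc_atMost[symmetric] add.commute)

lemma tail_sum_0[simp]: "tail_sum b S 0 x = 0"
  by (simp add: tail_sum_def)

locale tsetup =
  fixes n :: nat and DB :: "'a::complex_banach set" and B :: "'a \<Rightarrow> 'a"
    and DA :: "nat \<Rightarrow> 'a set" and A :: "nat \<Rightarrow> 'a \<Rightarrow> 'a"
    and C :: "'a \<Rightarrow> 'a" and k :: "nat \<Rightarrow> complex" and a :: "nat \<Rightarrow> nat \<Rightarrow> complex"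
  assumes B_closed: "closed_op DB B"
    and A_closed: "\<forall>i\<in>{1..n}. closed_op (DA i) (A i)"
    and C_bdd: "bounded_clinear C" and C_inj: "inj C"
    and k0: "k 0 \<noteq> 0"
    and a0: "\<forall>i\<in>{1..n}. a i 0 \<noteq> 0"
begin

abbreviation "D \<equiv> Tdom DB DA n"
abbreviation "T \<equiv> Top B A a n"
abbreviation "Ti \<equiv> Tinv DB DA B A a n"
abbreviation "fam S \<equiv> disc_exist_fam k C DB B DA A a n S"
abbreviation "rr S v x \<equiv> rec_rhs k C A a n S v x"

lemma Bop: "clinear_op DB B" using B_closed by (simp add: closed_op_def)
lemma Aop: "i \<in> {1..n} \<Longrightarrow> clinear_op (DA i) (A i)" using A_closed by (simp add: closed_op_def)
lemma a0': "i \<in> {1..n} \<Longrightarrow> a i 0 \<noteq> 0" using a0 by blast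

lemma csub_DB: "csub DB" by (rule clop_csub[OF Bop])
lemma csub_DA: "i \<in> {1..n} \<Longrightarrow> csub (DA i)" by (rule clop_csub[OF Aop])
lemma csub_D: "csub D"
  unfolding Tdom_def by (intro csub_Int csub_DB csub_INT csub_DA)

lemma D_iff: "x \<in> D \<longleftrightarrow> x \<in> DB \<and> (\<forall>i\<in>{1..n}. x \<in> DA i)"
  by (auto simp: Tdom_def)
lemma D_DB: "x \<in> D \<Longrightarrow> x \<in> DB" by (simp add: D_iff)
lemma D_DA: "x \<in> D \<Longrightarrow> i \<in> {1..n} \<Longrightarrow> x \<in> DA i" by (simp add: D_iff)

lemma T_def': "T x = B x - (\<Sum>i=1..n. a i 0 *\<^sub>C A i x)" by (simp add: Top_def)

lemma T_add: "x \<in> D \<Longrightarrow> y \<in> D \<Longrightarrow> T (x + y) = T x + T y"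
proof -
  assume x: "x \<in> D" and y: "y \<in> D"
  have "A i (x + y) = A i x + A i y" if "i \<in> {1..n}" for i
    using x y that by (simp add: clop_add[OF Aop] D_DA)
  then have "(\<Sum>i=1..n. a i 0 *\<^sub>C A i (x + y)) = (\<Sum>i=1..n. a i 0 *\<^sub>C A i x) + (\<Sum>i=1..n. a i 0 *\<^sub>C A i y)"
    by (simp add: scaleC_add_right sum.distrib)
  moreover have "B (x + y) = B x + B y" using x y by (simp add: clop_add[OF Bop] D_DB)
  ultimately show ?thesis by (simp add: T_def' algebra_simps)
qed

lemma T_scale: "x \<in> D \<Longrightarrow> T (c *\<^sub>C x) = c *\<^sub>C T x"
proof -
  assume x: "x \<in> D"
  have "A i (c *\<^sub>C x) = c *\<^sub>C A i x" if "i \<in> {1..n}" for i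
    using x that by (simp add: clop_scale[OF Aop] D_DA)
  then have "(\<Sum>i=1..n. a i 0 *\<^sub>C A i (c *\<^sub>C x)) = c *\<^sub>C (\<Sum>i=1..n. a i 0 *\<^sub>C A i x)"
    by (simp add: scaleC_sum_right scaleC_scaleC mult.commute)
  moreover have "B (c *\<^sub>C x) = c *\<^sub>C B x" using x by (simp add: clop_scale[OF Bop] D_DB)
  ultimately show ?thesis by (simp add: T_def' scaleC_diff_right)
qed

lemma T_0: "T 0 = 0"
  using T_scale[of 0 0] csub_0[OF csub_D] by simp

lemma T_neg: "x \<in> D \<Longrightarrow> T (- x) = - T x"
  by (metis T_scale neg_scaleC)

lemma T_diff: "x \<in> D \<Longrightarrow> y \<in> D \<Longrightarrow> T (x - y) = T x - T y"
  using T_add[of x "-y"] T_neg[of y] csub_neg[OF csub_D, of y] by simp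

lemma T_sum: "(\<And>j. j \<in> J \<Longrightarrow> g j \<in> D) \<Longrightarrow> T (\<Sum>j\<in>J. g j) = (\<Sum>j\<in>J. T (g j))"
proof (induction J rule: infinite_finite_induct)
  case (infinite A) then show ?case by (simp add: T_0)
next
  case empty then show ?case by (simp add: T_0)
next
  case (insert i F)
  have "(\<Sum>j\<in>F. g j) \<in> D" using insert by (intro csub_sum[OF csub_D]) auto
  then show ?case using insert by (simp add: T_add)
qed

lemma csub_R: "csub (T ` D)"
  unfolding csub_def
proof (intro conjI ballI allI)
  show "0 \<in> T ` D" using T_0 csub_0[OF csub_D] by (metis image_eqI)
  fix x y assume "x \<in> T ` D" "y \<in> T ` D"
  then obtain p q where "p \<in> D" "q \<in> D" "x = T p" "y = T q" by blast
  then show "x + y \<in> T ` D" using T_add csub_add[OF csub_D] by (metis image_eqI)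
next
  fix c x assume "x \<in> T ` D"
  then obtain p where "p \<in> D" "x = T p" by blast
  then show "c *\<^sub>C x \<in> T ` D" using T_scale csub_scale[OF csub_D] by (metis image_eqI)
qed

lemma rr_0: "rr S 0 x = k 0 *\<^sub>C C x"
proof -
  have "A i 0 = 0" if "i \<in> {1..n}" for i using clop_0[OF Aop[OF that]] .
  then show ?thesis by (simp add: rec_rhs_def)
qed

context
  assumes Tinj: "inj_on T D"
begin

lemma Ti_T: "x \<in> D \<Longrightarrow> Ti (T x) = x"
  unfolding Tinv_def by (rule the_inv_into_f_f[OF Tinj])

lemma T_Ti: "z \<in> T ` D \<Longrightarrow> T (Ti z) = z"
  unfolding Tinv_def by (rule f_the_inv_into_f[OF Tinj])

lemma Ti_D: "z \<in> T ` D \<Longrightarrow> Ti z \<in> D"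
  unfolding Tinv_def by (rule the_inv_into_into[OF Tinj]) auto

lemma Ti_add: "z \<in> T ` D \<Longrightarrow> w \<in> T ` D \<Longrightarrow> Ti (z + w) = Ti z + Ti w"
proof -
  assume z: "z \<in> T ` D" and w: "w \<in> T ` D"
  have "z + w = T (Ti z + Ti w)" using z w by (simp add: T_add Ti_D T_Ti)
  then show ?thesis using z w by (simp add: Ti_T csub_add[OF csub_D] Ti_D)
qed

lemma Ti_scale: "z \<in> T ` D \<Longrightarrow> Ti (c *\<^sub>C z) = c *\<^sub>C Ti z"
proof -
  assume z: "z \<in> T ` D"
  have "c *\<^sub>C z = T (c *\<^sub>C Ti z)" using z by (simp add: T_scale Ti_D T_Ti)
  then show ?thesis using z by (simp add: Ti_T csub_scale[OF csub_D] Ti_D)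
qed

lemma Ti_0: "Ti 0 = 0"
  using Ti_T[of 0] T_0 csub_0[OF csub_D] by simp

lemma Ti_sum: "(\<And>j. j \<in> J \<Longrightarrow> g j \<in> T ` D) \<Longrightarrow> Ti (\<Sum>j\<in>J. g j) = (\<Sum>j\<in>J. Ti (g j))"
proof (induction J rule: infinite_finite_induct)
  case (infinite A) then show ?case by (simp add: Ti_0)
next
  case empty then show ?case by (simp add: Ti_0)
next
  case (insert i F)
  have "(\<Sum>j\<in>F. g j) \<in> T ` D" using insert by (intro csub_sum[OF csub_R]) auto
  then show ?case using insert by (simp add: Ti_add)
qed

lemma T_inj_eq: "x \<in> D \<Longrightarrow> y \<in> D \<Longrightarrow> T x = T y \<Longrightarrow> x = y"
  using Tinj by (meson inj_onD)

end

section \<open>Existence families: basic consequences\<close>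

context
  fixes S :: "nat \<Rightarrow> 'a \<Rightarrow> 'a"
  assumes F: "fam S"
begin

lemma famS: "bounded_clinear (S v)" using F by (simp add: disc_exist_fam_def)
lemma famC: "i \<in> {1..n} \<Longrightarrow> conv0 (a i) S v x \<in> DA i" using F by (simp add: disc_exist_fam_def)
lemma famCB: "i \<in> {1..n} \<Longrightarrow> bounded_clinear (\<lambda>x. A i (conv0 (a i) S v x))"
  using F by (simp add: disc_exist_fam_def)
lemma famB: "S v x \<in> DB" using F by (simp add: disc_exist_fam_def)
lemma famE: "B (S v x) = k v *\<^sub>C C x + (\<Sum>i=1..n. A i (conv0 (a i) S v x))"
  using F by (simp add: disc_exist_fam_def)

lemma fam_DA: "i \<in> {1..n} \<Longrightarrow> S v x \<in> DA i"
proof (induction v arbitrary: x rule: less_induct)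
  case (less v)
  have tl: "tail_sum (a i) S v x \<in> DA i"
    unfolding tail_sum_def using less by (intro csub_sum[OF csub_DA] csub_scale[OF csub_DA]) auto
  have "a i 0 *\<^sub>C S v x = conv0 (a i) S v x - tail_sum (a i) S v x" by (simp add: conv0_split)
  then have "a i 0 *\<^sub>C S v x \<in> DA i" using famC[OF less.prems] tl csub_diff[OF csub_DA[OF less.prems]] by simp
  then have "inverse (a i 0) *\<^sub>C (a i 0 *\<^sub>C S v x) \<in> DA i" by (rule csub_scale[OF csub_DA[OF less.prems]])
  then show ?case using a0'[OF less.prems] by simp
qed

lemma fam_D: "S v x \<in> D"
  using famB fam_DA by (simp add: D_iff)

lemma fam_tail: "i \<in> {1..n} \<Longrightarrow> tail_sum (a i) S v x \<in> DA i"
  unfolding tail_sum_def using fam_DA by (intro csub_sum[OF csub_DA] csub_scale[OF csub_DA]) auto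

lemma fam_Aconv: "i \<in> {1..n} \<Longrightarrow> A i (conv0 (a i) S v x) = a i 0 *\<^sub>C A i (S v x) + A i (tail_sum (a i) S v x)"
  by (simp add: conv0_split clop_add[OF Aop] clop_scale[OF Aop] fam_DA fam_tail csub_scale[OF csub_DA])

lemma fam_T: "T (S v x) = rr S v x"
proof -
  have "T (S v x) = k v *\<^sub>C C x + (\<Sum>i=1..n. A i (conv0 (a i) S v x)) - (\<Sum>i=1..n. a i 0 *\<^sub>C A i (S v x))"
    by (simp add: T_def' famE)
  also have "(\<Sum>i=1..n. A i (conv0 (a i) S v x)) = (\<Sum>i=1..n. a i 0 *\<^sub>C A i (S v x)) + (\<Sum>i=1..n. A i (tail_sum (a i) S v x))"
    by (simp add: fam_Aconv sum.distrib)
  finally show ?thesis by (simp add: rec_rhs_def)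
qed

lemma fam_AS: "i \<in> {1..n} \<Longrightarrow> bounded_clinear (\<lambda>x. A i (S v x))"
proof (induction v rule: less_induct)
  case (less v)
  have tl: "bounded_clinear (\<lambda>x. A i (tail_sum (a i) S v x))"
  proof (rule bcl_cong)
    show "bounded_clinear (\<lambda>x. \<Sum>j<v. a i (v - j) *\<^sub>C A i (S j x))"
      using less by (intro bcl_sum_fun bcl_scale) auto
    show "(\<Sum>j<v. a i (v - j) *\<^sub>C A i (S j x)) = A i (tail_sum (a i) S v x)" for x
      unfolding tail_sum_def using less.prems
      by (simp add: clop_sum[OF Aop] clop_scale[OF Aop] fam_DA csub_scale[OF csub_DA])
  qed
  show ?case
  proof (rule bcl_cong)
    show "bounded_clinear (\<lambda>x. inverse (a i 0) *\<^sub>C (A i (conv0 (a i) S v x) - A i (tail_sum (a i) S v x)))"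
      by (intro bcl_scale bcl_minus_fun famCB[OF less.prems] tl)
    show "inverse (a i 0) *\<^sub>C (A i (conv0 (a i) S v x) - A i (tail_sum (a i) S v x)) = A i (S v x)" for x
      using a0'[OF less.prems] by (simp add: fam_Aconv[OF less.prems])
  qed
qed

end

section \<open>Part (i)\<close>

lemma part_i:
  assumes F: "fam S"
    and comm: "\<forall>x\<in>D. S 0 (B x) = B (S 0 x) \<and> (\<forall>i\<in>{1..n}. S 0 (A i x) = A i (S 0 x))"
  shows "inj_on T D \<and>
         range C \<subseteq> T ` D \<and>
         bounded_clinear (\<lambda>x. Ti (C x)) \<and>
         S 0 = (\<lambda>x. k 0 *\<^sub>C Ti (C x)) \<and>
         (\<forall>v\<ge>1. \<forall>x. (\<forall>i\<in>{1..n}. tail_sum (a i) S v x \<in> DA i) \<and>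
                    rr S v x \<in> T ` D \<and>
                    S v x = Ti (rr S v x)) \<and>
         (\<forall>i\<in>{1..n}. \<forall>v. range (S v) \<subseteq> DA i \<and> bounded_clinear (\<lambda>x. A i (S v x)))"
proof -
  have S0: "bounded_clinear (S 0)" by (rule famS[OF F])
  have TS0: "T (S 0 x) = k 0 *\<^sub>C C x" for x using fam_T[OF F, of 0 x] by (simp add: rr_0)
  have zero: "x = 0" if x: "x \<in> D" and Tx: "T x = 0" for x
  proof -
    have "S 0 (T x) = S 0 (B x) - (\<Sum>i=1..n. a i 0 *\<^sub>C S 0 (A i x))"
      by (simp add: T_def' bcl_diff[OF S0] bcl_sum[OF S0] bcl_scaleC[OF S0])
    also have "\<dots> = B (S 0 x) - (\<Sum>i=1..n. a i 0 *\<^sub>C A i (S 0 x))"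
      using comm x by simp
    also have "\<dots> = T (S 0 x)" by (simp add: T_def')
    finally have "k 0 *\<^sub>C C x = 0" using Tx TS0 bcl_0[OF S0] by simp
    then have "C x = C 0" using k0 bcl_0[OF C_bdd] by simp
    then show ?thesis using C_inj by (meson injD)
  qed
  have inj: "inj_on T D"
  proof (rule inj_onI)
    fix x y assume "x \<in> D" "y \<in> D" "T x = T y"
    then have "T (x - y) = 0" by (simp add: T_diff)
    then have "x - y = 0" using zero csub_diff[OF csub_D] \<open>x \<in> D\<close> \<open>y \<in> D\<close> by blast
    then show "x = y" by simp
  qed
  have Cx: "C x = T (S 0 (inverse (k 0) *\<^sub>C x))" for x
    using k0 by (simp add: TS0 bcl_scaleC[OF C_bdd])
  have rng: "range C \<subseteq> T ` D" using Cx fam_D[OF F] by blast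
  have TiC: "Ti (C x) = inverse (k 0) *\<^sub>C S 0 x" for x
  proof -
    have "Ti (C x) = S 0 (inverse (k 0) *\<^sub>C x)"
      using Cx[of x] Ti_T[OF inj fam_D[OF F, of 0 "inverse (k 0) *\<^sub>C x"]] by simp
    then show ?thesis by (simp add: bcl_scaleC[OF S0])
  qed
  have bTiC: "bounded_clinear (\<lambda>x. Ti (C x))"
    by (rule bcl_cong[OF bcl_scale[OF S0, of "inverse (k 0)"]]) (simp add: TiC)
  have S0eq: "S 0 = (\<lambda>x. k 0 *\<^sub>C Ti (C x))"
    using k0 by (simp add: TiC)
  have rec: "(\<forall>i\<in>{1..n}. tail_sum (a i) S v x \<in> DA i) \<and> rr S v x \<in> T ` D \<and> S v x = Ti (rr S v x)" for v x
    using fam_tail[OF F] fam_T[OF F, of v x] fam_D[OF F, of v x] Ti_T[OF inj fam_D[OF F, of v x]]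
    by (metis image_eqI)
  show ?thesis
    using inj rng bTiC S0eq rec fam_DA[OF F] fam_AS[OF F] by blast
qed

end

context tsetup
begin

inductive_set GS :: "('a \<Rightarrow> 'a) set" where
  gchain: "set is \<subseteq> {1..n} \<Longrightarrow> opchain Ti C A is \<in> GS"
| gadd: "f \<in> GS \<Longrightarrow> g \<in> GS \<Longrightarrow> (\<lambda>x. f x + g x) \<in> GS"
| gscale: "f \<in> GS \<Longrightarrow> (\<lambda>x. c *\<^sub>C f x) \<in> GS"
| gzero: "(\<lambda>x. 0) \<in> GS"

lemma opchain_Nil_fun: "opchain Ti C A [] = (\<lambda>x. Ti (C x))"
  by (rule ext) simp

lemma G_cong: "f \<in> GS \<Longrightarrow> (\<And>x. f x = g x) \<Longrightarrow> g \<in> GS"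
proof -
  assume "f \<in> GS" "\<And>x. f x = g x"
  then have "f = g" by auto
  then show ?thesis using \<open>f \<in> GS\<close> by simp
qed

lemma G_sum: "(\<And>i. i \<in> I \<Longrightarrow> g i \<in> GS) \<Longrightarrow> (\<lambda>x. \<Sum>i\<in>I. g i x) \<in> GS"
proof (induction I rule: infinite_finite_induct)
  case (infinite A) then show ?case by (simp add: gzero)
next
  case empty then show ?case by (simp add: gzero)
next
  case (insert i F) then show ?case by (simp add: gadd)
qed

context
  assumes hyp: "hyp_ii C DB B DA A a n"
begin

lemma Tinj: "inj_on T D" using hyp by (simp add: hyp_ii_def)
lemma rngC: "C x \<in> T ` D" using hyp by (auto simp: hyp_ii_def)
lemma bTiC: "bounded_clinear (\<lambda>x. Ti (C x))" using hyp by (simp add: hyp_ii_def)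
lemma chain_def: "is \<noteq> [] \<Longrightarrow> set is \<subseteq> {1..n} \<Longrightarrow> chain_defined D T Ti C DA A is x"
  using hyp by (simp add: hyp_ii_def)
lemma chain_bcl: "is \<noteq> [] \<Longrightarrow> set is \<subseteq> {1..n} \<Longrightarrow> bounded_clinear (opchain Ti C A is)"
  using hyp by (simp add: hyp_ii_def)

lemma chain_props:
  assumes "set is \<subseteq> {1..n}"
  shows "bounded_clinear (opchain Ti C A is) \<and> opchain Ti C A is x \<in> D \<and>
         (\<forall>i\<in>{1..n}. A i (opchain Ti C A is x) \<in> T ` D)"
proof (intro conjI ballI)
  show "bounded_clinear (opchain Ti C A is)"
  proof (cases "is")
    case Nil then show ?thesis using bTiC by (simp add: opchain_Nil_fun)
  next
    case (Cons j js) then show ?thesis using chain_bcl assms by blast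
  qed
  show "opchain Ti C A is x \<in> D"
  proof (cases "is")
    case Nil then show ?thesis using Ti_D[OF Tinj rngC] by simp
  next
    case (Cons j js)
    then have "A j (opchain Ti C A js x) \<in> T ` D" using chain_def[of "is" x] assms by simp
    then show ?thesis using Cons Ti_D[OF Tinj] by simp
  qed
  fix i assume i: "i \<in> {1..n}"
  have "chain_defined D T Ti C DA A (i # is) x" using chain_def[of "i # is" x] assms i by simp
  then show "A i (opchain Ti C A is x) \<in> T ` D" by simp
qed

lemma G_props:
  assumes "f \<in> GS"
  shows "bounded_clinear f \<and> (\<forall>x. f x \<in> D) \<and> (\<forall>i\<in>{1..n}. \<forall>x. A i (f x) \<in> T ` D) \<and>
         (\<forall>i\<in>{1..n}. (\<lambda>x. Ti (A i (f x))) \<in> GS)"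
  using assms
proof (induction rule: GS.induct)
  case (gchain "is")
  have "(\<lambda>x. Ti (A i (opchain Ti C A is x))) \<in> GS" if "i \<in> {1..n}" for i
  proof -
    have "opchain Ti C A (i # is) \<in> GS" using gchain that by (intro GS.gchain) auto
    then show ?thesis by (rule G_cong) simp
  qed
  then show ?case using chain_props[OF gchain] by blast
next
  case (gadd f g)
  have bcl: "bounded_clinear (\<lambda>x. f x + g x)" using gadd by (intro bcl_plus) auto
  have D: "f x + g x \<in> D" for x using gadd csub_add[OF csub_D] by blast
  have Aadd: "A i (f x + g x) = A i (f x) + A i (g x)" if "i \<in> {1..n}" for i x
    using gadd that by (simp add: clop_add[OF Aop] D_DA)
  have R: "A i (f x + g x) \<in> T ` D" if "i \<in> {1..n}" for i x
    using gadd that Aadd csub_add[OF csub_R] by simp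
  have G: "(\<lambda>x. Ti (A i (f x + g x))) \<in> GS" if i: "i \<in> {1..n}" for i
  proof (rule G_cong)
    show "(\<lambda>x. Ti (A i (f x)) + Ti (A i (g x))) \<in> GS" using gadd i by (intro GS.gadd) auto
    show "Ti (A i (f x)) + Ti (A i (g x)) = Ti (A i (f x + g x))" for x
      using gadd i by (simp add: Aadd Ti_add[OF Tinj])
  qed
  show ?case using bcl D R G by blast
next
  case (gscale f c)
  have bcl: "bounded_clinear (\<lambda>x. c *\<^sub>C f x)" using gscale by (intro bcl_scale) auto
  have D: "c *\<^sub>C f x \<in> D" for x using gscale csub_scale[OF csub_D] by blast
  have Asc: "A i (c *\<^sub>C f x) = c *\<^sub>C A i (f x)" if "i \<in> {1..n}" for i x
    using gscale that by (simp add: clop_scale[OF Aop] D_DA)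
  have R: "A i (c *\<^sub>C f x) \<in> T ` D" if "i \<in> {1..n}" for i x
    using gscale that Asc csub_scale[OF csub_R] by simp
  have G: "(\<lambda>x. Ti (A i (c *\<^sub>C f x))) \<in> GS" if i: "i \<in> {1..n}" for i
  proof (rule G_cong)
    show "(\<lambda>x. c *\<^sub>C Ti (A i (f x))) \<in> GS" using gscale i by (intro GS.gscale) auto
    show "c *\<^sub>C Ti (A i (f x)) = Ti (A i (c *\<^sub>C f x))" for x
      using gscale i by (simp add: Asc Ti_scale[OF Tinj])
  qed
  show ?case using bcl D R G by blast
next
  case gzero
  have A0: "A i 0 = 0" if "i \<in> {1..n}" for i using clop_0[OF Aop[OF that]] .
  have R: "A i 0 \<in> T ` D" if "i \<in> {1..n}" for i using A0[OF that] csub_0[OF csub_R] by simp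
  have G: "(\<lambda>x. Ti (A i 0)) \<in> GS" if "i \<in> {1..n}" for i
    using A0[OF that] Ti_0[OF Tinj] GS.gzero by simp
  show ?case using bcl_zero csub_0[OF csub_D] R G by blast
qed

lemma G_bcl: "f \<in> GS \<Longrightarrow> bounded_clinear f" using G_props by blast
lemma G_D: "f \<in> GS \<Longrightarrow> f x \<in> D" using G_props by blast
lemma G_R: "f \<in> GS \<Longrightarrow> i \<in> {1..n} \<Longrightarrow> A i (f x) \<in> T ` D" using G_props by blast
lemma G_TiA: "f \<in> GS \<Longrightarrow> i \<in> {1..n} \<Longrightarrow> (\<lambda>x. Ti (A i (f x))) \<in> GS" using G_props by blast
lemma G_A:
  assumes f: "f \<in> GS" and i: "i \<in> {1..n}"
  shows "bounded_clinear (\<lambda>x. A i (f x))"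
proof (rule closed_op_comp_bcl[OF _ G_bcl[OF f]])
  show "closed_op (DA i) (A i)" using A_closed i by blast
  show "f x \<in> DA i" for x by (rule D_DA[OF G_D[OF f] i])
qed

context
  fixes S :: "nat \<Rightarrow> 'a \<Rightarrow> 'a"
  assumes SR: "S_rec k C DB B DA A a n S"
begin

lemma S0: "S 0 = (\<lambda>x. k 0 *\<^sub>C Ti (C x))" using SR by (simp add: S_rec_def)
lemma Sv: "v \<ge> 1 \<Longrightarrow> S v = (\<lambda>x. Ti (rr S v x))" using SR by (simp add: S_rec_def)

lemma tail_G: "(\<And>j. j < v \<Longrightarrow> S j \<in> GS) \<Longrightarrow> (\<lambda>x. tail_sum b S v x) \<in> GS"
  unfolding tail_sum_def by (intro G_sum GS.gscale) auto

lemma S_G: "S v \<in> GS"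
proof (induction v rule: less_induct)
  case (less v)
  show ?case
  proof (cases "v = 0")
    case True
    have "opchain Ti C A [] \<in> GS" by (rule GS.gchain) simp
    then have "(\<lambda>x. k 0 *\<^sub>C opchain Ti C A [] x) \<in> GS" by (rule GS.gscale)
    then show ?thesis using True S0 by simp
  next
    case False
    have tG: "(\<lambda>x. tail_sum (a i) S v x) \<in> GS" for i using less by (intro tail_G) auto
    have eq: "Ti (rr S v x) = k v *\<^sub>C Ti (C x) + (\<Sum>i=1..n. Ti (A i (tail_sum (a i) S v x)))" for x
    proof -
      have R: "A i (tail_sum (a i) S v x) \<in> T ` D" if "i \<in> {1..n}" for i by (rule G_R[OF tG that])
      have "(\<Sum>i=1..n. A i (tail_sum (a i) S v x)) \<in> T ` D" using R by (intro csub_sum[OF csub_R])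
      moreover have "Ti (\<Sum>i=1..n. A i (tail_sum (a i) S v x)) = (\<Sum>i=1..n. Ti (A i (tail_sum (a i) S v x)))"
        by (rule Ti_sum[OF Tinj]) (rule R)
      ultimately show ?thesis
        by (simp add: rec_rhs_def Ti_add[OF Tinj] csub_scale[OF csub_R] rngC Ti_scale[OF Tinj])
    qed
    have "(\<lambda>x. k v *\<^sub>C Ti (C x) + (\<Sum>i=1..n. Ti (A i (tail_sum (a i) S v x)))) \<in> GS"
    proof (intro GS.gadd GS.gscale G_sum)
      show "(\<lambda>x. Ti (C x)) \<in> GS" using GS.gchain[of "[]"] by (simp add: opchain_Nil_fun)
      show "(\<lambda>x. Ti (A i (tail_sum (a i) S v x))) \<in> GS" if "i \<in> {1..n}" for i
        by (rule G_TiA[OF tG that])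
    qed
    then show ?thesis using Sv[of v] False eq by simp
  qed
qed

lemma S_bcl: "bounded_clinear (S v)" by (rule G_bcl[OF S_G])
lemma S_D: "S v x \<in> D" by (rule G_D[OF S_G])
lemma S_tail_G: "(\<lambda>x. tail_sum b S v x) \<in> GS" by (rule tail_G) (rule S_G)
lemma S_tail_D: "tail_sum b S v x \<in> D" by (rule G_D[OF S_tail_G])

lemma S_rr: "rr S v x \<in> T ` D"
proof -
  have "A i (tail_sum (a i) S v x) \<in> T ` D" if "i \<in> {1..n}" for i by (rule G_R[OF S_tail_G that])
  then have "(\<Sum>i=1..n. A i (tail_sum (a i) S v x)) \<in> T ` D" by (intro csub_sum[OF csub_R])
  then show ?thesis unfolding rec_rhs_def by (intro csub_add[OF csub_R] csub_scale[OF csub_R] rngC)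
qed

lemma S_T: "T (S v x) = rr S v x"
proof (cases "v = 0")
  case True
  then show ?thesis using S0 by (simp add: T_scale Ti_D[OF Tinj rngC] T_Ti[OF Tinj rngC] rr_0)
next
  case False
  then show ?thesis using Sv[of v] by (simp add: T_Ti[OF Tinj S_rr])
qed

lemma S_fam: "fam S"
  unfolding disc_exist_fam_def
proof (intro conjI allI ballI)
  fix v show "bounded_clinear (S v)" by (rule S_bcl)
next
  fix v i x assume i: "i \<in> {1..n}"
  have cG: "(\<lambda>x. conv0 (a i) S v x) \<in> GS" unfolding conv0_def by (intro G_sum GS.gscale S_G)
  show "conv0 (a i) S v x \<in> DA i" using G_D[OF cG] D_DA i by blast
next
  fix v i assume i: "i \<in> {1..n}"
  have cG: "(\<lambda>x. conv0 (a i) S v x) \<in> GS" unfolding conv0_def by (intro G_sum GS.gscale S_G)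
  show "bounded_clinear (\<lambda>x. A i (conv0 (a i) S v x))" by (rule G_A[OF cG i])
next
  fix v x show "S v x \<in> DB" using S_D D_DB by blast
next
  fix v x
  have Ac: "A i (conv0 (a i) S v x) = a i 0 *\<^sub>C A i (S v x) + A i (tail_sum (a i) S v x)" if i: "i \<in> {1..n}" for i
    using i S_D S_tail_D D_DA
    by (simp add: conv0_split clop_add[OF Aop] clop_scale[OF Aop] csub_scale[OF csub_DA])
  have "B (S v x) = T (S v x) + (\<Sum>i=1..n. a i 0 *\<^sub>C A i (S v x))" by (simp add: T_def')
  also have "\<dots> = k v *\<^sub>C C x + (\<Sum>i=1..n. A i (conv0 (a i) S v x))"
    by (simp add: S_T rec_rhs_def Ac sum.distrib algebra_simps)
  finally show "B (S v x) = k v *\<^sub>C C x + (\<Sum>i=1..n. A i (conv0 (a i) S v x))" .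
qed

lemma S_unique: "fam S' \<Longrightarrow> S' = S"
proof -
  assume F': "fam S'"
  have "S' v = S v" for v
  proof (induction v rule: less_induct)
    case (less v)
    have tl: "tail_sum b S' v x = tail_sum b S v x" for b x
      unfolding tail_sum_def using less by simp
    have "T (S' v x) = T (S v x)" for x
      using fam_T[OF F', of v x] S_T[of v x] by (simp add: rec_rhs_def tl)
    then show ?case using T_inj_eq[OF Tinj fam_D[OF F'] S_D] by blast
  qed
  then show ?thesis by blast
qed

lemma S_AS: "i \<in> {1..n} \<Longrightarrow> bounded_clinear (\<lambda>x. A i (S v x))"
  by (rule G_A[OF S_G])

section \<open>The I-version\<close>

lemma K_lemma:
  assumes U2: "U2 DB B DA A n I" and U3: "U3 DA A n I"
    and i: "i \<in> {1..n} - I" and z: "z \<in> T ` D" "z \<in> DA i"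
  shows "A i z \<in> T ` D \<and> Ti (A i z) = A i (Ti z)"
proof -
  have i1: "i \<in> {1..n}" using i by blast
  define y where "y = Ti z"
  have y: "y \<in> D" "T y = z" using Ti_D[OF Tinj z(1)] T_Ti[OF Tinj z(1)] by (simp_all add: y_def)
  have yB: "y \<in> DB" and yA: "\<And>j. j \<in> {1..n} \<Longrightarrow> y \<in> DA j" using y D_iff by auto
  have u2: "B y \<in> DA i" "A i y \<in> DB" "A i (B y) = B (A i y)"
    using U2 i yB yA[OF i1] unfolding U2_def by blast+
  have u3: "A j y \<in> DA i \<and> A i y \<in> DA j \<and> A i (A j y) = A j (A i y)" if j: "j \<in> {1..n}" for j
    using U3 i j yA[OF i1] yA[OF j] unfolding U3_def by blast
  have AyD: "A i y \<in> D" using u2 u3 D_iff by blast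
  have mem: "a j 0 *\<^sub>C A j y \<in> DA i" if "j \<in> {1..n}" for j
    using u3[OF that] csub_scale[OF csub_DA[OF i1]] by blast
  have "T (A i y) = B (A i y) - (\<Sum>j=1..n. a j 0 *\<^sub>C A j (A i y))" by (simp add: T_def')
  also have "\<dots> = A i (B y) - (\<Sum>j=1..n. a j 0 *\<^sub>C A i (A j y))" using u2 u3 by simp
  also have "\<dots> = A i (B y) - A i (\<Sum>j=1..n. a j 0 *\<^sub>C A j y)"
  proof -
    have "A i (\<Sum>j=1..n. a j 0 *\<^sub>C A j y) = (\<Sum>j=1..n. A i (a j 0 *\<^sub>C A j y))"
      by (rule clop_sum[OF Aop[OF i1]]) (rule mem)
    also have "\<dots> = (\<Sum>j=1..n. a j 0 *\<^sub>C A i (A j y))"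
      by (rule sum.cong) (use u3 in \<open>simp_all add: clop_scale[OF Aop[OF i1]]\<close>)
    finally show ?thesis by simp
  qed
  also have "\<dots> = A i (T y)"
  proof -
    have smem: "(\<Sum>j=1..n. a j 0 *\<^sub>C A j y) \<in> DA i" by (rule csub_sum[OF csub_DA[OF i1]]) (rule mem)
    show ?thesis using u2 smem by (simp add: T_def' clop_diff[OF Aop[OF i1]])
  qed
  finally have TA: "T (A i y) = A i z" using y by simp
  then have "A i z \<in> T ` D" using AyD by (metis image_eqI)
  moreover have "Ti (A i z) = A i y" using TA Ti_T[OF Tinj AyD] by simp
  ultimately show ?thesis by (simp add: y_def)
qed

lemma part_ii_I:
  assumes U1: "U1 C DB B DA A n I" and U2: "U2 DB B DA A n I" and U3: "U3 DA A n I"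
  shows "disc_exist_fam_I k C DB B DA A a n I S"
proof -
  have U1i: "C x \<in> DA i \<and> A i (C x) = C (A i x)" if "i \<in> {1..n} - I" "x \<in> DA i" for i x
    using U1 that unfolding U1_def op_commutes_bdd_def by blast
  have main: "S v (A i x) = A i (S v x)" if i: "i \<in> {1..n} - I" and x: "x \<in> DA i" for v i x
    using x
  proof (induction v arbitrary: x rule: less_induct)
    case (less v)
    have i1: "i \<in> {1..n}" using i by blast
    note Ai = Aop[OF i1]
    note csA = csub_DA[OF i1]
    show ?case
    proof (cases "v = 0")
      case True
      have K: "Ti (A i (C x)) = A i (Ti (C x))"
        using K_lemma[OF U2 U3 i rngC] U1i[OF i less.prems] by blast
      have "S 0 (A i x) = k 0 *\<^sub>C Ti (A i (C x))" using S0 U1i[OF i less.prems] by simp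
      also have "\<dots> = A i (S 0 x)"
        using S0 K Ti_D[OF Tinj rngC] D_DA[OF _ i1] by (simp add: clop_scale[OF Ai])
      finally show ?thesis using True by simp
    next
      case False
      have tl: "tail_sum (a j) S v (A i x) = A i (tail_sum (a j) S v x)" for j
        unfolding tail_sum_def using less S_D D_DA[OF _ i1]
        by (simp add: clop_sum[OF Ai] clop_scale[OF Ai] csub_scale[OF csA])
      have u3: "A j (tail_sum (a j) S v x) \<in> DA i \<and> A j (A i (tail_sum (a j) S v x)) = A i (A j (tail_sum (a j) S v x))"
        if j: "j \<in> {1..n}" for j
      proof -
        have "tail_sum (a j) S v x \<in> DA i \<inter> DA j" using S_tail_D D_DA i1 j by blast
        then show ?thesis using U3 i j unfolding U3_def by metis
      qed
      have Cx: "C x \<in> DA i" "A i (C x) = C (A i x)" using U1i[OF i less.prems] by auto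
      have sm: "(\<Sum>j=1..n. A j (tail_sum (a j) S v x)) \<in> DA i" using u3 by (intro csub_sum[OF csA]) auto
      have ssum: "A i (\<Sum>j=1..n. A j (tail_sum (a j) S v x)) = (\<Sum>j=1..n. A i (A j (tail_sum (a j) S v x)))"
        by (rule clop_sum[OF Ai]) (use u3 in blast)
      have rrA: "rr S v (A i x) = A i (rr S v x)"
        using Cx sm u3 csub_scale[OF csA Cx(1)] ssum
        by (simp add: rec_rhs_def tl clop_add[OF Ai] clop_scale[OF Ai])
      have rrD: "rr S v x \<in> DA i"
        unfolding rec_rhs_def by (intro csub_add[OF csA] csub_scale[OF csA] Cx sm)
      have K: "Ti (A i (rr S v x)) = A i (Ti (rr S v x))"
        using K_lemma[OF U2 U3 i S_rr rrD] by blast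
      show ?thesis using Sv[of v] False rrA K by simp
    qed
  qed
  show ?thesis
    unfolding disc_exist_fam_I_def using S_fam main S_D D_DA by auto
qed

end

end

end

locale pcalc =
  fixes D0 :: "'a::complex_banach set" and A0 :: "'a \<Rightarrow> 'a"
  assumes L: "clinear_op D0 A0"
begin

definition Dom :: "nat \<Rightarrow> 'a set" where "Dom j = {x. \<forall>l<j. (A0^^l) x \<in> D0}"
definition pf :: "nat \<Rightarrow> complex poly \<Rightarrow> 'a \<Rightarrow> 'a" where
  "pf N Q x = (\<Sum>r\<le>N. coeff Q r *\<^sub>C (A0^^r) x)"

lemma csD0: "csub D0" by (rule clop_csub[OF L])

lemma Dom_mono: "j \<le> j' \<Longrightarrow> x \<in> Dom j' \<Longrightarrow> x \<in> Dom j" by (auto simp: Dom_def)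

lemma Dom_0[simp]: "x \<in> Dom 0" by (simp add: Dom_def)

lemma Dom_Suc: "x \<in> Dom (Suc j) \<longleftrightarrow> x \<in> Dom j \<and> (A0^^j) x \<in> D0"
  by (auto simp: Dom_def less_Suc_eq)

lemma pow_pow: "(A0^^r) ((A0^^l) x) = (A0^^(r + l)) x" by (simp add: funpow_add)

lemma Dom_add: "x \<in> Dom (j + l) \<longleftrightarrow> x \<in> Dom l \<and> (A0^^l) x \<in> Dom j"
proof
  assume x: "x \<in> Dom (j + l)"
  show "x \<in> Dom l \<and> (A0^^l) x \<in> Dom j"
    using x by (auto simp: Dom_def pow_pow)
next
  assume x: "x \<in> Dom l \<and> (A0^^l) x \<in> Dom j"
  show "x \<in> Dom (j + l)"
    unfolding Dom_def
  proof (intro CollectI allI impI)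
    fix r assume r: "r < j + l"
    show "(A0^^r) x \<in> D0"
    proof (cases "r < l")
      case True then show ?thesis using x by (simp add: Dom_def)
    next
      case False
      then have "r = (r - l) + l" "r - l < j" using r by auto
      then have "(A0^^(r - l)) ((A0^^l) x) \<in> D0" using x by (simp add: Dom_def)
      then show ?thesis using pow_pow[of "r - l" l x] \<open>r = (r - l) + l\<close> by simp
    qed
  qed
qed

lemma pow_0: "(A0^^l) 0 = 0"
  by (induction l) (simp_all add: clop_0[OF L])

lemma pow_lin:
  "x \<in> Dom l \<Longrightarrow> y \<in> Dom l \<Longrightarrow> (A0^^l) (x + y) = (A0^^l) x + (A0^^l) y \<and> (A0^^l) (c *\<^sub>C x) = c *\<^sub>C (A0^^l) x"
proof (induction l arbitrary: x y)
  case 0 then show ?case by simp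
next
  case (Suc l)
  have x: "x \<in> Dom l" "(A0^^l) x \<in> D0" and y: "y \<in> Dom l" "(A0^^l) y \<in> D0"
    using Suc.prems by (simp_all add: Dom_Suc)
  have ih: "(A0^^l) (x + y) = (A0^^l) x + (A0^^l) y" "(A0^^l) (c *\<^sub>C x) = c *\<^sub>C (A0^^l) x"
    using Suc.IH[OF x(1) y(1)] by auto
  show ?case using x y by (simp add: ih clop_add[OF L] clop_scale[OF L])
qed

lemma pow_add: "x \<in> Dom l \<Longrightarrow> y \<in> Dom l \<Longrightarrow> (A0^^l) (x + y) = (A0^^l) x + (A0^^l) y"
  using pow_lin by blast
lemma pow_scale: "x \<in> Dom l \<Longrightarrow> (A0^^l) (c *\<^sub>C x) = c *\<^sub>C (A0^^l) x"
  using pow_lin[of x l x] by blast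

lemma Dom_csub: "csub (Dom j)"
  unfolding csub_def
proof (intro conjI ballI allI)
  show "0 \<in> Dom j" by (simp add: Dom_def pow_0 csub_0[OF csD0])
  fix x y assume "x \<in> Dom j" "y \<in> Dom j"
  then show "x + y \<in> Dom j"
    unfolding Dom_def using pow_add Dom_mono csub_add[OF csD0]
    by (simp add: Dom_def)
next
  fix c x assume "x \<in> Dom j"
  then show "c *\<^sub>C x \<in> Dom j"
    unfolding Dom_def using pow_scale Dom_mono csub_scale[OF csD0]
    by (simp add: Dom_def)
qed

lemma pow_sum: "(\<And>i. i \<in> I \<Longrightarrow> g i \<in> Dom l) \<Longrightarrow> (A0^^l) (\<Sum>i\<in>I. g i) = (\<Sum>i\<in>I. (A0^^l) (g i))"
proof (induction I rule: infinite_finite_induct)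
  case (infinite A) then show ?case by (simp add: pow_0)
next
  case empty then show ?case by (simp add: pow_0)
next
  case (insert i F)
  have "(\<Sum>j\<in>F. g j) \<in> Dom l" using insert by (intro csub_sum[OF Dom_csub]) auto
  then show ?case using insert by (simp add: pow_add)
qed

lemma pow_Dom: "x \<in> Dom (j + r) \<Longrightarrow> (A0^^r) x \<in> Dom j"
  by (simp add: Dom_add)

lemma pf_Dom: "x \<in> Dom (j + N) \<Longrightarrow> pf N Q x \<in> Dom j"
  unfolding pf_def
proof (intro csub_sum[OF Dom_csub] csub_scale[OF Dom_csub])
  fix r assume x: "x \<in> Dom (j + N)" and r: "r \<in> {..N}"
  then have "x \<in> Dom (j + r)" by (intro Dom_mono[OF _ x]) auto
  then show "(A0^^r) x \<in> Dom j" by (rule pow_Dom)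
qed

lemma pow_pf: "x \<in> Dom (l + N) \<Longrightarrow> (A0^^l) (pf N Q x) = pf N Q ((A0^^l) x)"
proof -
  assume x: "x \<in> Dom (l + N)"
  have m: "coeff Q r *\<^sub>C (A0^^r) x \<in> Dom l" if "r \<in> {..N}" for r
  proof -
    have "x \<in> Dom (l + r)" using that by (intro Dom_mono[OF _ x]) auto
    then show ?thesis by (intro csub_scale[OF Dom_csub] pow_Dom)
  qed
  have m2: "(A0^^r) x \<in> Dom l" if "r \<in> {..N}" for r
  proof -
    have "x \<in> Dom (l + r)" using that by (intro Dom_mono[OF _ x]) auto
    then show ?thesis by (intro pow_Dom)
  qed
  have "(A0^^l) (pf N Q x) = (\<Sum>r\<le>N. (A0^^l) (coeff Q r *\<^sub>C (A0^^r) x))"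
    unfolding pf_def by (rule pow_sum) (rule m)
  also have "\<dots> = (\<Sum>r\<le>N. coeff Q r *\<^sub>C (A0^^r) ((A0^^l) x))"
    by (rule sum.cong) (simp_all add: pow_scale m2 pow_pow add.commute)
  finally show ?thesis by (simp add: pf_def)
qed

lemma pf_add: "x \<in> Dom N \<Longrightarrow> y \<in> Dom N \<Longrightarrow> pf N Q (x + y) = pf N Q x + pf N Q y"
proof -
  assume x: "x \<in> Dom N" and y: "y \<in> Dom N"
  have "x \<in> Dom r" "y \<in> Dom r" if "r \<in> {..N}" for r using that x y Dom_mono by auto
  then show ?thesis
    unfolding pf_def by (simp add: pow_add scaleC_add_right sum.distrib)
qed

lemma pf_scale: "x \<in> Dom N \<Longrightarrow> pf N Q (c *\<^sub>C x) = c *\<^sub>C pf N Q x"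
proof -
  assume x: "x \<in> Dom N"
  have "x \<in> Dom r" if "r \<in> {..N}" for r using that x Dom_mono by auto
  then show ?thesis
    unfolding pf_def by (simp add: pow_scale scaleC_sum_right scaleC_scaleC mult.commute)
qed

lemma pf_0: "pf N Q 0 = 0" by (simp add: pf_def pow_0)

lemma pf_sum: "(\<And>i. i \<in> I \<Longrightarrow> g i \<in> Dom N) \<Longrightarrow> pf N Q (\<Sum>i\<in>I. g i) = (\<Sum>i\<in>I. pf N Q (g i))"
proof (induction I rule: infinite_finite_induct)
  case (infinite A) then show ?case by (simp add: pf_0)
next
  case empty then show ?case by (simp add: pf_0)
next
  case (insert i F)
  have "(\<Sum>j\<in>F. g j) \<in> Dom N" using insert by (intro csub_sum[OF Dom_csub]) auto
  then show ?case using insert by (simp add: pf_add)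
qed

lemma pf_poly_diff: "pf N (P - Q) x = pf N P x - pf N Q x"
  by (simp add: pf_def scaleC_diff_left sum_subtractf)

lemma pf_poly_smult: "pf N (smult c P) x = c *\<^sub>C pf N P x"
  by (simp add: pf_def scaleC_sum_right scaleC_scaleC)

lemma pf_poly_sum: "pf N (\<Sum>i\<in>I. Q i) x = (\<Sum>i\<in>I. pf N (Q i) x)"
  by (simp add: pf_def coeff_sum scaleC_sum_left sum.swap[of _ I])

lemma pf_deg: "degree Q \<le> N \<Longrightarrow> pf N Q x = poly_op_fun A0 Q x"
  unfolding pf_def poly_op_fun_def
  by (rule sum.mono_neutral_right) (auto simp: coeff_eq_0)

lemma pf_deg': "degree Q \<le> N \<Longrightarrow> pf N Q x = pf (degree Q) Q x"
  using pf_deg[of Q N x] pf_deg[of Q "degree Q" x] by simp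

lemma regularity:
  assumes Q: "Q \<noteq> 0" and x: "x \<in> Dom (degree Q)" and px: "pf (degree Q) Q x \<in> Dom j"
  shows "x \<in> Dom (j + degree Q)"
  using px
proof (induction j)
  case 0 then show ?case using x by simp
next
  case (Suc j)
  define d where "d = degree Q"
  have xj: "x \<in> Dom (j + d)" using Suc Dom_mono[of j "Suc j"] by (simp add: d_def)
  have h: "(A0^^j) (pf d Q x) \<in> D0" using Suc.prems by (simp add: Dom_def d_def)
  have "(A0^^j) (pf d Q x) = pf d Q ((A0^^j) x)" using xj by (simp add: pow_pf add.commute)
  also have "\<dots> = (\<Sum>r\<le>d. coeff Q r *\<^sub>C (A0^^(r + j)) x)" by (simp add: pf_def pow_pow)
  also have "\<dots> = coeff Q d *\<^sub>C (A0^^(d + j)) x + (\<Sum>r<d. coeff Q r *\<^sub>C (A0^^(r + j)) x)"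
    by (simp add: lessThan_Suc_atMost[symmetric] add.commute)
  finally have eq: "coeff Q d *\<^sub>C (A0^^(d + j)) x = (A0^^j) (pf d Q x) - (\<Sum>r<d. coeff Q r *\<^sub>C (A0^^(r + j)) x)"
    by (simp add: algebra_simps)
  have rest: "(\<Sum>r<d. coeff Q r *\<^sub>C (A0^^(r + j)) x) \<in> D0"
  proof (intro csub_sum[OF csD0] csub_scale[OF csD0])
    fix r assume "r \<in> {..<d}"
    then have "r + j < j + d" by simp
    then show "(A0^^(r + j)) x \<in> D0" using xj by (simp add: Dom_def)
  qed
  have "coeff Q d *\<^sub>C (A0^^(d + j)) x \<in> D0" using eq h rest csub_diff[OF csD0] by simp
  then have "inverse (coeff Q d) *\<^sub>C (coeff Q d *\<^sub>C (A0^^(d + j)) x) \<in> D0" by (rule csub_scale[OF csD0])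
  then have "(A0^^(d + j)) x \<in> D0" using Q by (simp add: d_def)
  then show ?case using xj by (simp add: Dom_Suc d_def add.commute)
qed

end

locale tpoly = tsetup n DB B DA A C k a + pcalc D0 A0
  for n and DB :: "'a::complex_banach set" and B DA A C k a and D0 :: "'a set" and A0 +
  fixes PB :: "complex poly" and P :: "nat \<Rightarrow> complex poly"
  assumes commC: "op_commutes_bdd C D0 A0"
    and polyB: "is_poly_of DB B D0 A0 PB"
    and polyA: "\<forall>i\<in>{1..n}. is_poly_of (DA i) (A i) D0 A0 (P i)"
begin

definition "m = Max (insert (degree PB) ((\<lambda>i. degree (P i)) ` {1..n}))"
definition "PT = PB - (\<Sum>i=1..n. smult (a i 0) (P i))"
definition "dT = degree PT"

lemma pod: "poly_op_dom D0 A0 Q = Dom (degree Q)"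
  by (simp add: poly_op_dom_def Dom_def)

lemma DB_eq: "DB = Dom (degree PB)" using polyB by (simp add: is_poly_of_def pod)
lemma DA_eq: "i \<in> {1..n} \<Longrightarrow> DA i = Dom (degree (P i))" using polyA by (simp add: is_poly_of_def pod)
lemma B_eq: "x \<in> DB \<Longrightarrow> B x = pf (degree PB) PB x"
  using polyB by (simp add: is_poly_of_def pf_deg)
lemma A_eq: "i \<in> {1..n} \<Longrightarrow> x \<in> DA i \<Longrightarrow> A i x = pf (degree (P i)) (P i) x"
  using polyA by (simp add: is_poly_of_def pf_deg)

lemma degB: "degree PB \<le> m" unfolding m_def by (intro Max_ge) auto
lemma degA: "i \<in> {1..n} \<Longrightarrow> degree (P i) \<le> m" unfolding m_def by (intro Max_ge) auto

lemma D_eq: "x \<in> D \<longleftrightarrow> x \<in> Dom m"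
proof
  assume x: "x \<in> D"
  have "m \<in> insert (degree PB) ((\<lambda>i. degree (P i)) ` {1..n})" unfolding m_def by (intro Max_in) auto
  then show "x \<in> Dom m" using x D_iff DB_eq DA_eq by auto
next
  assume x: "x \<in> Dom m"
  have "x \<in> DA i" if "i \<in> {1..n}" for i using Dom_mono[OF degA[OF that] x] DA_eq[OF that] by simp
  moreover have "x \<in> DB" using Dom_mono[OF degB x] DB_eq by simp
  ultimately show "x \<in> D" unfolding D_iff by blast
qed

lemma dT_le: "dT \<le> m"
  unfolding dT_def PT_def
  by (intro degree_diff_le degB degree_sum_le order.trans[OF degree_smult_le] degA) auto

lemma T_pf: "u \<in> D \<Longrightarrow> T u = pf dT PT u"
proof -
  assume u: "u \<in> D"
  have "B u = pf m PB u" using u D_DB B_eq degB pf_deg' by metis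
  moreover have "A i u = pf m (P i) u" if "i \<in> {1..n}" for i
    using u D_DA A_eq degA pf_deg' that by metis
  ultimately have "T u = pf m PB u - (\<Sum>i=1..n. a i 0 *\<^sub>C pf m (P i) u)" by (simp add: T_def')
  also have "\<dots> = pf m PT u" by (simp add: PT_def pf_poly_diff pf_poly_sum pf_poly_smult)
  also have "\<dots> = pf dT PT u" using pf_deg'[OF dT_le[unfolded dT_def]] by (simp add: dT_def)
  finally show ?thesis .
qed

lemma R_T: "z \<in> T ` D \<Longrightarrow> z \<in> Dom (m - dT)"
proof -
  assume "z \<in> T ` D"
  then obtain u where u: "u \<in> D" "z = T u" by blast
  have "u \<in> Dom ((m - dT) + dT)" using u D_eq dT_le by simp
  then show ?thesis using u T_pf pf_Dom by simp
qed

lemma Cpow: "x \<in> Dom l \<Longrightarrow> C x \<in> Dom l \<and> (A0^^l) (C x) = C ((A0^^l) x)"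
proof (induction l)
  case 0 then show ?case by simp
next
  case (Suc l)
  have x: "x \<in> Dom l" "(A0^^l) x \<in> D0" using Suc.prems by (simp_all add: Dom_Suc)
  have ih: "C x \<in> Dom l" "(A0^^l) (C x) = C ((A0^^l) x)" using Suc.IH[OF x(1)] by auto
  have c: "C ((A0^^l) x) \<in> D0" "A0 (C ((A0^^l) x)) = C (A0 ((A0^^l) x))"
    using commC x(2) unfolding op_commutes_bdd_def by auto
  show ?case using ih c by (simp add: Dom_Suc)
qed

context
  assumes hyp: "hyp_ii C DB B DA A a n"
  fixes S assumes SR: "S_rec k C DB B DA A a n S"
begin

lemma PT0_triv: "PT = 0 \<Longrightarrow> (x::'a) = 0"
proof -
  assume PT0: "PT = 0"
  obtain u where u: "u \<in> D" "C x = T u" using rngC[OF hyp, of x] by blast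
  have "T u = 0" using T_pf[OF u(1)] PT0 by (simp add: pf_def)
  then have "C x = C 0" using u bcl_0[OF C_bdd] by simp
  then show ?thesis using C_inj by (meson injD)
qed

lemma main_ind:
  assumes PT0: "PT \<noteq> 0"
  shows "(\<forall>j x. x \<in> Dom j \<longrightarrow> S v x \<in> Dom (j + m)) \<and>
         (\<forall>l x. x \<in> Dom l \<longrightarrow> (A0^^l) (S v x) = S v ((A0^^l) x))"
proof (induction v rule: less_induct)
  case (less v)
  have IHR: "S q x \<in> Dom (j + m)" if "q < v" "x \<in> Dom j" for q j x using less that by blast
  have IHC: "(A0^^l) (S q x) = S q ((A0^^l) x)" if "q < v" "x \<in> Dom l" for q l x using less that by blast
  have tailDom: "tail_sum b S v x \<in> Dom (j + m)" if "x \<in> Dom j" for b j x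
    unfolding tail_sum_def using IHR that by (intro csub_sum[OF Dom_csub] csub_scale[OF Dom_csub]) auto
  have tailpow: "(A0^^l) (tail_sum b S v x) = tail_sum b S v ((A0^^l) x)" if x: "x \<in> Dom l" for b l x
  proof -
    have mem: "b (v - q) *\<^sub>C S q x \<in> Dom l" if "q \<in> {..<v}" for q
      using IHR[where q=q and j=l and x=x] that x Dom_mono[of l "l + m"] by (intro csub_scale[OF Dom_csub]) auto
    have mem2: "S q x \<in> Dom l" if "q \<in> {..<v}" for q
      using IHR[where q=q and j=l and x=x] that x Dom_mono[of l "l + m"] by auto
    have "(A0^^l) (tail_sum b S v x) = (\<Sum>q<v. (A0^^l) (b (v - q) *\<^sub>C S q x))"
      unfolding tail_sum_def by (rule pow_sum) (rule mem)
    also have "\<dots> = (\<Sum>q<v. b (v - q) *\<^sub>C S q ((A0^^l) x))"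
      by (rule sum.cong) (simp_all add: pow_scale mem2 IHC x)
    finally show ?thesis by (simp add: tail_sum_def)
  qed
  have Atail_eq: "A i (tail_sum (a i) S v x) = pf m (P i) (tail_sum (a i) S v x)" if i: "i \<in> {1..n}" for i x
    using A_eq[OF i D_DA[OF S_tail_D[OF hyp SR] i]] pf_deg'[OF degA[OF i]] by simp
  have Atail_pow: "(A0^^l) (A i (tail_sum (a i) S v x)) = A i (tail_sum (a i) S v ((A0^^l) x))"
    if i: "i \<in> {1..n}" and x: "x \<in> Dom l" for i l x
  proof -
    have "(A0^^l) (A i (tail_sum (a i) S v x)) = (A0^^l) (pf m (P i) (tail_sum (a i) S v x))"
      by (simp add: Atail_eq[OF i])
    also have "\<dots> = pf m (P i) ((A0^^l) (tail_sum (a i) S v x))"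
      by (rule pow_pf) (rule tailDom[OF x])
    also have "\<dots> = A i (tail_sum (a i) S v ((A0^^l) x))" by (simp add: tailpow[OF x] Atail_eq[OF i])
    finally show ?thesis .
  qed
  have Atail_Dom: "A i (tail_sum (a i) S v x) \<in> Dom ((m - dT) + j)" if i: "i \<in> {1..n}" and x: "x \<in> Dom j" for i j x
  proof -
    have 1: "A i (tail_sum (a i) S v x) \<in> Dom j"
      using Atail_eq[OF i] pf_Dom[OF tailDom[OF x]] by simp
    have "(A0^^j) (A i (tail_sum (a i) S v x)) \<in> T ` D"
      using Atail_pow[OF i x] G_R[OF hyp S_tail_G[OF hyp SR] i] by simp
    then have 2: "(A0^^j) (A i (tail_sum (a i) S v x)) \<in> Dom (m - dT)" by (rule R_T)
    show ?thesis using 1 2 Dom_add by blast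
  qed
  have CDom: "C x \<in> Dom ((m - dT) + j)" if x: "x \<in> Dom j" for j x
  proof -
    have "(A0^^j) (C x) \<in> Dom (m - dT)" using Cpow[OF x] R_T[OF rngC[OF hyp]] by simp
    then show ?thesis using Cpow[OF x] Dom_add by blast
  qed
  have rrDom: "rr S v x \<in> Dom ((m - dT) + j)" if x: "x \<in> Dom j" for j x
    unfolding rec_rhs_def
    by (intro csub_add[OF Dom_csub] csub_scale[OF Dom_csub] CDom[OF x] csub_sum[OF Dom_csub] Atail_Dom[OF _ x]) auto
  have R: "S v x \<in> Dom (j + m)" if x: "x \<in> Dom j" for j x
  proof -
    have y: "S v x \<in> Dom m" using S_D[OF hyp SR] D_eq by blast
    then have yd: "S v x \<in> Dom (degree PT)" using dT_le Dom_mono by (simp add: dT_def)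
    have "pf (degree PT) PT (S v x) \<in> Dom ((m - dT) + j)"
      using T_pf[OF S_D[OF hyp SR]] S_T[OF hyp SR] rrDom[OF x] by (simp add: dT_def)
    then have "S v x \<in> Dom ((m - dT) + j + degree PT)" by (rule regularity[OF PT0 yd])
    then show ?thesis using dT_le by (simp add: dT_def add.commute)
  qed
  have Cv: "(A0^^l) (S v x) = S v ((A0^^l) x)" if x: "x \<in> Dom l" for l x
  proof -
    have y: "S v x \<in> Dom (l + m)" by (rule R[OF x])
    have "S v x \<in> Dom (m + l)" using y by (simp add: add.commute)
    then have zD: "(A0^^l) (S v x) \<in> D" using D_eq pow_Dom by blast
    have yd: "S v x \<in> Dom (l + dT)" using Dom_mono[OF _ y, of "l + dT"] dT_le by simp
    have Cl: "C x \<in> Dom l" using Cpow[OF x] by blast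
    have Al: "A i (tail_sum (a i) S v x) \<in> Dom l" if "i \<in> {1..n}" for i
      using Atail_Dom[OF that x] Dom_mono[of l "m - dT + l"] by simp
    have "T ((A0^^l) (S v x)) = pf dT PT ((A0^^l) (S v x))" by (rule T_pf[OF zD])
    also have "\<dots> = (A0^^l) (pf dT PT (S v x))" using pow_pf[OF yd] by simp
    also have "\<dots> = (A0^^l) (rr S v x)" using T_pf[OF S_D[OF hyp SR]] S_T[OF hyp SR] by simp
    also have "\<dots> = k v *\<^sub>C (A0^^l) (C x) + (\<Sum>i=1..n. (A0^^l) (A i (tail_sum (a i) S v x)))"
    proof -
      have s: "(\<Sum>i=1..n. A i (tail_sum (a i) S v x)) \<in> Dom l" using Al by (intro csub_sum[OF Dom_csub]) auto
      have "(A0^^l) (\<Sum>i=1..n. A i (tail_sum (a i) S v x)) = (\<Sum>i=1..n. (A0^^l) (A i (tail_sum (a i) S v x)))"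
        by (rule pow_sum) (rule Al)
      then show ?thesis using s Cl csub_scale[OF Dom_csub Cl]
        by (simp add: rec_rhs_def pow_add pow_scale)
    qed
    also have "\<dots> = rr S v ((A0^^l) x)"
      using Cpow[OF x] Atail_pow[OF _ x] by (simp add: rec_rhs_def)
    also have "\<dots> = T (S v ((A0^^l) x))" using S_T[OF hyp SR] by simp
    finally show ?thesis using T_inj_eq[OF Tinj[OF hyp] zD S_D[OF hyp SR]] by blast
  qed
  show ?case using R Cv by blast
qed

lemma part_ii_poly: "disc_exist_fam_I k C DB B DA A a n {} S"
proof -
  have main: "A i (S v x) = S v (A i x)" if i: "i \<in> {1..n}" and x: "x \<in> DA i" for v i x
  proof (cases "PT = 0")
    case True then show ?thesis using PT0_triv by metis
  next
    case False
    define e where "e = degree (P i)"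
    have xe: "x \<in> Dom e" using x DA_eq[OF i] by (simp add: e_def)
    have xr: "x \<in> Dom r" if "r \<in> {..e}" for r using xe that Dom_mono by auto
    have Sb: "bounded_clinear (S v)" by (rule S_bcl[OF hyp SR])
    have "A i (S v x) = pf e (P i) (S v x)"
      using A_eq[OF i D_DA[OF S_D[OF hyp SR] i]] by (simp add: e_def)
    also have "\<dots> = (\<Sum>r\<le>e. coeff (P i) r *\<^sub>C S v ((A0^^r) x))"
      unfolding pf_def by (rule sum.cong) (use main_ind[OF False] xr in auto)
    also have "\<dots> = S v (pf e (P i) x)"
      by (simp add: pf_def bcl_sum[OF Sb] bcl_scaleC[OF Sb])
    also have "\<dots> = S v (A i x)" using A_eq[OF i x] by (simp add: e_def)
    finally show ?thesis .
  qed
  show ?thesis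
    unfolding disc_exist_fam_I_def using S_fam[OF hyp SR] main S_D[OF hyp SR] D_DA by auto
qed

end

end

lemma shifted_sum_le:
  fixes \<alpha> :: "nat \<Rightarrow> real"
  assumes a0: "\<And>r. 0 \<le> \<alpha> r" and as: "summable \<alpha>"
  shows "(\<Sum>v\<in>{Suc j..N}. \<alpha> (v - j)) \<le> (\<Sum>r. \<alpha> (Suc r))"
proof -
  have as': "summable (\<lambda>r. \<alpha> (Suc r))" using as by (simp add: summable_Suc_iff)
  have pos: "0 \<le> (\<Sum>r. \<alpha> (Suc r))" using as' a0 by (simp add: suminf_nonneg)
  show ?thesis
  proof (cases "j < N")
    case False
    then have "{Suc j..N} = {}" by auto
    then show ?thesis using pos by simp
  next
    case True
    have "{Suc j..N} = {0 + Suc j..<(N - j) + Suc j}" using True by auto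
    then have "(\<Sum>v\<in>{Suc j..N}. \<alpha> (v - j)) = (\<Sum>r\<in>{0..<N - j}. \<alpha> (r + Suc j - j))"
      by (simp only: sum.shift_bounds_nat_ivl)
    also have "\<dots> = (\<Sum>r\<in>{0..<N - j}. \<alpha> (Suc r))" by simp
    also have "\<dots> \<le> (\<Sum>r. \<alpha> (Suc r))" by (rule sum_le_suminf[OF as']) (auto intro: a0)
    finally show ?thesis .
  qed
qed

lemma renewal_summable:
  fixes s c q :: "nat \<Rightarrow> real" and \<alpha> :: "nat \<Rightarrow> nat \<Rightarrow> real" and I :: "nat set"
  assumes fin: "finite I"
    and s0: "\<And>v. 0 \<le> s v" and c0: "\<And>v. 0 \<le> c v" and c: "summable c"
    and a0: "\<And>i r. i \<in> I \<Longrightarrow> 0 \<le> \<alpha> i r" and as: "\<And>i. i \<in> I \<Longrightarrow> summable (\<alpha> i)"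
    and q0: "\<And>i. i \<in> I \<Longrightarrow> 0 \<le> q i"
    and bnd: "\<And>v. s v \<le> c v + (\<Sum>i\<in>I. \<Sum>j<v. \<alpha> i (v - j) * q i * s j)"
    and th: "(\<Sum>i\<in>I. \<Sum>r. \<alpha> i (Suc r) * q i) < 1"
  shows "summable s"
proof -
  define Ai where "Ai i = (\<Sum>r. \<alpha> i (Suc r))" for i
  define \<theta> where "\<theta> = (\<Sum>i\<in>I. Ai i * q i)"
  have th': "\<theta> < 1"
  proof -
    have "(\<Sum>r. \<alpha> i (Suc r) * q i) = Ai i * q i" if "i \<in> I" for i
      unfolding Ai_def using as[OF that] by (simp add: suminf_mult2 summable_Suc_iff)
    then show ?thesis using th unfolding \<theta>_def by simp
  qed
  have th0: "0 \<le> \<theta>"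
    unfolding \<theta>_def Ai_def using as a0 q0
    by (intro sum_nonneg mult_nonneg_nonneg suminf_nonneg) (auto simp: summable_Suc_iff)
  have part: "(\<Sum>v\<le>N. s v) \<le> suminf c / (1 - \<theta>)" for N
  proof -
    define PN where "PN = (\<Sum>v\<le>N. s v)"
    have inner: "(\<Sum>v\<le>N. \<Sum>j<v. \<alpha> i (v - j) * q i * s j) \<le> Ai i * q i * PN" if i: "i \<in> I" for i
    proof -
      have "(\<Sum>v\<le>N. \<Sum>j<v. \<alpha> i (v - j) * q i * s j) = (\<Sum>j<N. \<Sum>v\<in>{Suc j..N}. \<alpha> i (v - j) * q i * s j)"
        by (rule sum.nested_swap')
      also have "\<dots> = (\<Sum>j<N. (\<Sum>v\<in>{Suc j..N}. \<alpha> i (v - j)) * (q i * s j))"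
        by (simp add: sum_distrib_right mult.assoc)
      also have "\<dots> \<le> (\<Sum>j<N. Ai i * (q i * s j))"
        unfolding Ai_def using shifted_sum_le[OF a0[OF i] as[OF i]] q0[OF i] s0
        by (intro sum_mono mult_right_mono) auto
      also have "\<dots> = Ai i * q i * (\<Sum>j<N. s j)" by (simp add: sum_distrib_left mult.assoc)
      also have "\<dots> \<le> Ai i * q i * PN"
      proof (rule mult_left_mono)
        show "(\<Sum>j<N. s j) \<le> PN" unfolding PN_def using s0 by (intro sum_mono2) auto
        show "0 \<le> Ai i * q i" unfolding Ai_def using as[OF i] a0[OF i] q0[OF i]
          by (intro mult_nonneg_nonneg suminf_nonneg) (auto simp: summable_Suc_iff)
      qed
      finally show ?thesis .
    qed
    have "PN \<le> (\<Sum>v\<le>N. c v + (\<Sum>i\<in>I. \<Sum>j<v. \<alpha> i (v - j) * q i * s j))"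
      unfolding PN_def by (rule sum_mono) (rule bnd)
    also have "\<dots> = (\<Sum>v\<le>N. c v) + (\<Sum>i\<in>I. \<Sum>v\<le>N. \<Sum>j<v. \<alpha> i (v - j) * q i * s j)"
      by (simp add: sum.distrib sum.swap[of _ I])
    also have "\<dots> \<le> suminf c + (\<Sum>i\<in>I. Ai i * q i * PN)"
      by (intro add_mono sum_le_suminf[OF c] sum_mono inner) (auto intro: c0)
    also have "\<dots> = suminf c + \<theta> * PN" by (simp add: \<theta>_def sum_distrib_right)
    finally have "(1 - \<theta>) * PN \<le> suminf c" by (simp add: algebra_simps)
    then show ?thesis unfolding PN_def using th' by (simp add: pos_le_divide_eq mult.commute)
  qed
  show ?thesis
  proof (rule summableI_nonneg_bounded[OF s0])
    fix N
    have "(\<Sum>i<N. s i) \<le> (\<Sum>v\<le>N. s v)" using s0 by (intro sum_mono2) auto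
    also have "\<dots> \<le> suminf c / (1 - \<theta>)" by (rule part)
    finally show "(\<Sum>i<N. s i) \<le> suminf c / (1 - \<theta>)" .
  qed
qed

lemma conv_summable:
  fixes t b :: "nat \<Rightarrow> real"
  assumes t0: "\<And>v. 0 \<le> t v" and ts: "summable t" and bs: "summable (\<lambda>v. norm (b v))"
  shows "summable (\<lambda>v. \<Sum>j\<le>v. norm (b (v - j)) * t j)"
proof -
  have "summable (\<lambda>v. \<Sum>j\<le>v. t j * norm (b (v - j)))"
    by (rule summable_Cauchy_product) (use ts t0 bs in auto)
  then show ?thesis by (simp add: mult.commute)
qed

context pcalc
begin

lemma pf_pf_expand:
  assumes x: "x \<in> Dom (N + M)"
  shows "pf N P (pf M Q x) = (\<Sum>r\<le>N. \<Sum>s\<le>M. (coeff P r * coeff Q s) *\<^sub>C (A0^^(r + s)) x)"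
proof -
  have "pf N P (pf M Q x) = (\<Sum>r\<le>N. coeff P r *\<^sub>C (A0^^r) (pf M Q x))" by (simp add: pf_def)
  also have "\<dots> = (\<Sum>r\<le>N. coeff P r *\<^sub>C pf M Q ((A0^^r) x))"
  proof (rule sum.cong)
    fix r assume "r \<in> {..N}"
    then have "x \<in> Dom (r + M)" using Dom_mono[OF _ x, of "r + M"] by simp
    then show "coeff P r *\<^sub>C (A0^^r) (pf M Q x) = coeff P r *\<^sub>C pf M Q ((A0^^r) x)" by (simp add: pow_pf)
  qed simp
  also have "\<dots> = (\<Sum>r\<le>N. \<Sum>s\<le>M. (coeff P r * coeff Q s) *\<^sub>C (A0^^(r + s)) x)"
    by (simp add: pf_def scaleC_sum_right scaleC_scaleC pow_pow add.commute)
  finally show ?thesis .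
qed

lemma pf_pf:
  assumes x: "x \<in> Dom (N + M)"
  shows "pf N P (pf M Q x) = pf M Q (pf N P x)"
proof -
  have x': "x \<in> Dom (M + N)" using x by (simp add: add.commute)
  show ?thesis
    unfolding pf_pf_expand[OF x] pf_pf_expand[OF x']
    by (subst sum.swap) (simp add: mult.commute add.commute)
qed

end

lemma conv_summable':
  fixes t :: "nat \<Rightarrow> real" and b :: "nat \<Rightarrow> 'b::real_normed_vector"
  assumes t0: "\<And>v. 0 \<le> t v" and ts: "summable t" and bs: "summable (\<lambda>v. norm (b v))"
  shows "summable (\<lambda>v. \<Sum>j\<le>v. norm (b (v - j)) * t j)"
  using conv_summable[OF t0 ts, of "\<lambda>v. norm (b v)"] bs by simp

lemma onorm_nn: "bounded_clinear f \<Longrightarrow> 0 \<le> onorm f"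
  by (rule onorm_pos_le[OF bcl_bl])

lemma onorm_comp_le: "bounded_clinear f \<Longrightarrow> bounded_clinear g \<Longrightarrow> onorm (\<lambda>x. f (g x)) \<le> onorm f * onorm g"
  using onorm_compose[OF bcl_bl bcl_bl, of f g] by (simp add: o_def)

lemma norm_dsum_bound:
  fixes h :: "nat \<Rightarrow> nat \<Rightarrow> 'a::complex_banach \<Rightarrow> 'a"
  assumes h: "\<And>i j. i \<in> I \<Longrightarrow> bounded_clinear (h i j)"
  shows "norm (\<Sum>i\<in>I. \<Sum>j\<in>J. b i j *\<^sub>C h i j x) \<le> (\<Sum>i\<in>I. \<Sum>j\<in>J. cmod (b i j) * onorm (h i j)) * norm x"
proof -
  have "norm (\<Sum>i\<in>I. \<Sum>j\<in>J. b i j *\<^sub>C h i j x) \<le> (\<Sum>i\<in>I. norm (\<Sum>j\<in>J. b i j *\<^sub>C h i j x))"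
    by (rule norm_sum)
  also have "\<dots> \<le> (\<Sum>i\<in>I. \<Sum>j\<in>J. norm (b i j *\<^sub>C h i j x))"
    by (intro sum_mono norm_sum)
  also have "\<dots> \<le> (\<Sum>i\<in>I. \<Sum>j\<in>J. cmod (b i j) * (onorm (h i j) * norm x))"
    by (intro sum_mono) (simp add: norm_scaleC mult_left_mono bcl_onorm h)
  also have "\<dots> = (\<Sum>i\<in>I. \<Sum>j\<in>J. cmod (b i j) * onorm (h i j)) * norm x"
    by (simp add: sum_distrib_right mult.assoc)
  finally show ?thesis .
qed

lemma onorm_repr:
  fixes f g :: "'a::complex_banach \<Rightarrow> 'a" and h :: "nat \<Rightarrow> nat \<Rightarrow> 'a \<Rightarrow> 'a"
  assumes g: "bounded_clinear g" and h: "\<And>i j. i \<in> I \<Longrightarrow> bounded_clinear (h i j)"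
    and eq: "\<And>x. f x = c *\<^sub>C g x + (\<Sum>i\<in>I. \<Sum>j\<in>J. b i j *\<^sub>C h i j x)"
  shows "onorm f \<le> cmod c * onorm g + (\<Sum>i\<in>I. \<Sum>j\<in>J. cmod (b i j) * onorm (h i j))"
proof (rule onorm_bound)
  show "0 \<le> cmod c * onorm g + (\<Sum>i\<in>I. \<Sum>j\<in>J. cmod (b i j) * onorm (h i j))"
    using onorm_nn[OF g] onorm_nn[OF h]
    by (intro add_nonneg_nonneg mult_nonneg_nonneg sum_nonneg) auto
  fix x
  have "norm (f x) \<le> norm (c *\<^sub>C g x) + norm (\<Sum>i\<in>I. \<Sum>j\<in>J. b i j *\<^sub>C h i j x)"
    by (simp add: eq norm_triangle_ineq)
  also have "\<dots> \<le> cmod c * (onorm g * norm x) + (\<Sum>i\<in>I. \<Sum>j\<in>J. cmod (b i j) * onorm (h i j)) * norm x"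
    by (intro add_mono norm_dsum_bound h) (simp add: norm_scaleC mult_left_mono bcl_onorm g)
  finally show "norm (f x) \<le> (cmod c * onorm g + (\<Sum>i\<in>I. \<Sum>j\<in>J. cmod (b i j) * onorm (h i j))) * norm x"
    by (simp add: algebra_simps)
qed

lemma onorm_conv:
  fixes f :: "'a::complex_banach \<Rightarrow> 'a" and h :: "nat \<Rightarrow> 'a \<Rightarrow> 'a"
  assumes h: "\<And>j. bounded_clinear (h j)"
    and eq: "\<And>x. f x = (\<Sum>j\<in>J. b j *\<^sub>C h j x)"
  shows "onorm f \<le> (\<Sum>j\<in>J. cmod (b j) * onorm (h j))"
proof (rule onorm_bound)
  show "0 \<le> (\<Sum>j\<in>J. cmod (b j) * onorm (h j))"
    using onorm_nn[OF h] by (intro sum_nonneg mult_nonneg_nonneg) auto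
  fix x
  have "norm (f x) \<le> (\<Sum>j\<in>J. norm (b j *\<^sub>C h j x))" unfolding eq by (rule norm_sum)
  also have "\<dots> \<le> (\<Sum>j\<in>J. cmod (b j) * (onorm (h j) * norm x))"
    by (intro sum_mono) (simp add: norm_scaleC mult_left_mono bcl_onorm h)
  finally show "norm (f x) \<le> (\<Sum>j\<in>J. cmod (b j) * onorm (h j)) * norm x"
    by (simp add: sum_distrib_right mult.assoc)
qed

context tsetup
begin

context
  assumes Cid: "C = id" and Tinj3: "inj_on T D" and Tsurj: "T ` D = UNIV"
    and bTi: "bounded_clinear Ti"
begin

lemma Ti_D3: "Ti x \<in> D" using Ti_D[OF Tinj3, of x] Tsurj by simp

lemma AT: "i \<in> {1..n} \<Longrightarrow> bounded_clinear (\<lambda>x. A i (Ti x))"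
  by (rule closed_op_comp_bcl[OF _ bTi]) (use A_closed Ti_D3 D_DA in auto)

lemma opchain_D: "opchain Ti C A is x \<in> D"
  by (cases "is") (simp_all add: Ti_D3)

lemma chain_ok: "set is \<subseteq> {1..n} \<Longrightarrow> chain_defined D T Ti C DA A is x"
proof (induction "is")
  case Nil then show ?case using Tsurj by simp
next
  case (Cons i js)
  then show ?case using opchain_D D_DA Tsurj by auto
qed

lemma chain_bcl3: "set is \<subseteq> {1..n} \<Longrightarrow> \<exists>h. bounded_clinear h \<and> (\<forall>x. opchain Ti C A is x = Ti (h x))"
proof (induction "is")
  case Nil then show ?case using Cid bcl_id by (intro exI[of _ "\<lambda>x. x"]) simp
next
  case (Cons i js)
  then obtain h where h: "bounded_clinear h" "\<And>x. opchain Ti C A js x = Ti (h x)" by auto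
  have i: "i \<in> {1..n}" using Cons by simp
  show ?case
  proof (intro exI conjI allI)
    show "bounded_clinear (\<lambda>x. A i (Ti (h x)))" by (rule bcl_comp[OF AT[OF i] h(1)])
    show "opchain Ti C A (i # js) x = Ti (A i (Ti (h x)))" for x by (simp add: h(2))
  qed
qed

lemma hyp3: "hyp_ii C DB B DA A a n"
  unfolding hyp_ii_def
proof (intro conjI allI impI)
  show "inj_on T D" by (rule Tinj3)
  show "range C \<subseteq> T ` D" using Tsurj by simp
  show "bounded_clinear (\<lambda>x. Ti (C x))" using bTi Cid by (simp add: bcl_cong)
  fix "is" assume "is \<noteq> [] \<and> set is \<subseteq> {1..n}"
  then have s: "set is \<subseteq> {1..n}" by simp
  show "chain_defined D T Ti C DA A is x" for x by (rule chain_ok[OF s])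
  obtain h where h: "bounded_clinear h" "\<And>x. opchain Ti C A is x = Ti (h x)" using chain_bcl3[OF s] by auto
  show "bounded_clinear (opchain Ti C A is)" by (rule bcl_cong[OF bcl_comp[OF bTi h(1)]]) (simp add: h(2))
qed

context
  fixes S assumes SR: "S_rec k C DB B DA A a n S"
begin

lemma S_repr: "S v x = k v *\<^sub>C Ti x + (\<Sum>i=1..n. Ti (A i (tail_sum (a i) S v x)))"
proof -
  have "S v x = Ti (T (S v x))" using Ti_T[OF Tinj3 S_D[OF hyp3 SR]] by simp
  also have "\<dots> = Ti (rr S v x)" by (simp add: S_T[OF hyp3 SR])
  also have "\<dots> = k v *\<^sub>C Ti x + (\<Sum>i=1..n. Ti (A i (tail_sum (a i) S v x)))"
    by (simp add: rec_rhs_def Cid bcl_add[OF bTi] bcl_scaleC[OF bTi] bcl_sum[OF bTi])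
  finally show ?thesis .
qed

lemma sumk: "summable (\<lambda>v. cmod (k v)) \<Longrightarrow> summable (\<lambda>v. cmod (k v) * onorm Ti)"
  by (rule summable_mult2)

section \<open>Case (a)\<close>

lemma case_a:
  assumes Ab: "\<forall>i\<in>{1..n}. DA i = UNIV \<and> bounded_clinear (A i)"
    and sa: "\<forall>i\<in>{1..n}. summable (\<lambda>v. cmod (a i v))" and sk: "summable (\<lambda>v. cmod (k v))"
    and th: "(\<Sum>i=1..n. \<Sum>v. cmod (a i (Suc v)) * onorm (\<lambda>x. Ti (A i x))) < 1"
  shows "summable (\<lambda>v. onorm (S v)) \<and> (\<forall>i\<in>{1..n}. summable (\<lambda>v. onorm (\<lambda>x. A i (conv0 (a i) S v x))))"
proof -
  have Abcl: "bounded_clinear (A i)" if "i \<in> {1..n}" for i using Ab that by blast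
  have TA: "bounded_clinear (\<lambda>x. Ti (A i x))" if "i \<in> {1..n}" for i
    by (rule bcl_comp[OF bTi Abcl[OF that]])
  have repr: "S v x = k v *\<^sub>C Ti x + (\<Sum>i=1..n. \<Sum>j<v. a i (v - j) *\<^sub>C Ti (A i (S j x)))" for v x
  proof -
    have "Ti (A i (tail_sum (a i) S v x)) = (\<Sum>j<v. a i (v - j) *\<^sub>C Ti (A i (S j x)))" if "i \<in> {1..n}" for i
      unfolding tail_sum_def
      using bcl_sum[OF TA[OF that], of "\<lambda>j. a i (v - j) *\<^sub>C S j x" "{..<v}"] bcl_scaleC[OF TA[OF that]]
      by simp
    then show ?thesis using S_repr[of v x] by simp
  qed
  have hb: "bounded_clinear (\<lambda>x. Ti (A i (S j x)))" if "i \<in> {1..n}" for i j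
    by (rule bcl_comp[OF TA[OF that] S_bcl[OF hyp3 SR]])
  have bnd: "onorm (S v) \<le> cmod (k v) * onorm Ti +
      (\<Sum>i\<in>{1..n}. \<Sum>j<v. cmod (a i (v - j)) * onorm (\<lambda>x. Ti (A i x)) * onorm (S j))" for v
  proof -
    have "onorm (S v) \<le> cmod (k v) * onorm Ti + (\<Sum>i\<in>{1..n}. \<Sum>j<v. cmod (a i (v - j)) * onorm (\<lambda>x. Ti (A i (S j x))))"
      by (rule onorm_repr[OF bTi hb repr])
    also have "\<dots> \<le> cmod (k v) * onorm Ti + (\<Sum>i\<in>{1..n}. \<Sum>j<v. cmod (a i (v - j)) * (onorm (\<lambda>x. Ti (A i x)) * onorm (S j)))"
      by (intro add_left_mono sum_mono mult_left_mono onorm_comp_le TA S_bcl[OF hyp3 SR]) auto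
    finally show ?thesis by (simp add: mult.assoc)
  qed
  have sS: "summable (\<lambda>v. onorm (S v))"
  proof (rule renewal_summable[where I="{1..n}" and \<alpha>="\<lambda>i r. cmod (a i r)" and q="\<lambda>i. onorm (\<lambda>x. Ti (A i x))"
        and c="\<lambda>v. cmod (k v) * onorm Ti"])
    show "summable (\<lambda>v. cmod (k v) * onorm Ti)" by (rule summable_mult2[OF sk])
    show "0 \<le> cmod (k v) * onorm Ti" for v using onorm_nn[OF bTi] by simp
    show "0 \<le> onorm (S v)" for v by (rule onorm_nn[OF S_bcl[OF hyp3 SR]])
    show "0 \<le> onorm (\<lambda>x. Ti (A i x))" if "i \<in> {1..n}" for i by (rule onorm_nn[OF TA[OF that]])
    show "onorm (S v) \<le> cmod (k v) * onorm Ti +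
      (\<Sum>i\<in>{1..n}. \<Sum>j<v. cmod (a i (v - j)) * onorm (\<lambda>x. Ti (A i x)) * onorm (S j))" for v by (rule bnd)
  qed (use sa th in auto)
  have sC: "summable (\<lambda>v. onorm (\<lambda>x. A i (conv0 (a i) S v x)))" if i: "i \<in> {1..n}" for i
  proof -
    have hb2: "bounded_clinear (\<lambda>x. A i (S j x))" for j by (rule bcl_comp[OF Abcl[OF i] S_bcl[OF hyp3 SR]])
    have eq: "A i (conv0 (a i) S v x) = (\<Sum>j\<in>{..v}. a i (v - j) *\<^sub>C A i (S j x))" for v x
      unfolding conv0_def atLeast0AtMost[symmetric] using Abcl[OF i] by (simp add: bcl_sum bcl_scaleC)
    have b1: "onorm (\<lambda>x. A i (conv0 (a i) S v x)) \<le> (\<Sum>j\<le>v. cmod (a i (v - j)) * (onorm (A i) * onorm (S j)))" for v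
    proof -
      have "onorm (\<lambda>x. A i (conv0 (a i) S v x)) \<le> (\<Sum>j\<in>{..v}. cmod (a i (v - j)) * onorm (\<lambda>x. A i (S j x)))"
        by (rule onorm_conv[OF hb2 eq])
      also have "\<dots> \<le> (\<Sum>j\<le>v. cmod (a i (v - j)) * (onorm (A i) * onorm (S j)))"
        by (intro sum_mono mult_left_mono onorm_comp_le[of "A i", simplified] Abcl[OF i] S_bcl[OF hyp3 SR]) auto
      finally show ?thesis .
    qed
    have cs: "summable (\<lambda>v. \<Sum>j\<le>v. norm (a i (v - j)) * (onorm (A i) * onorm (S j)))"
      by (rule conv_summable'[where t="\<lambda>j. onorm (A i) * onorm (S j)" and b="a i"]) (use sS sa i onorm_nn[OF Abcl[OF i]] onorm_nn[OF S_bcl[OF hyp3 SR]] in \<open>auto intro: summable_mult\<close>)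
    have cb: "0 \<le> onorm (\<lambda>x. A i (conv0 (a i) S v x))" for v
      by (rule onorm_nn[OF famCB[OF S_fam[OF hyp3 SR] i]])
    show ?thesis
      by (rule summable_comparison_test[OF _ cs]) (use b1 cb in \<open>auto intro!: exI[of _ 0]\<close>)
  qed
  show ?thesis using sS sC by blast
qed

end

end

end

context tsetup
begin

context
  assumes Cid: "C = id" and Tinj3: "inj_on T D" and Tsurj: "T ` D = UNIV"
    and bTi: "bounded_clinear Ti"
  fixes S assumes SR: "S_rec k C DB B DA A a n S"
begin

lemma case_b:
  assumes FI: "disc_exist_fam_I k C DB B DA A a n {} S"
    and AAc: "\<forall>i\<in>{1..n}. \<forall>l\<in>{1..n}. \<forall>w\<in>D. A i (A l (Ti w)) = A l (A i (Ti w))"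
    and sa: "\<forall>i\<in>{1..n}. summable (\<lambda>v. cmod (a i v))" and sk: "summable (\<lambda>v. cmod (k v))"
    and th: "(\<Sum>i=1..n. \<Sum>v. cmod (a i (Suc v)) * onorm (\<lambda>x. A i (Ti x))) < 1"
  shows "summable (\<lambda>v. onorm (S v)) \<and>
         (\<forall>i\<in>{1..n}. summable (\<lambda>v. onorm (\<lambda>x. A i (conv0 (a i) S v x)))) \<and>
         (\<forall>i\<in>{1..n}. summable (\<lambda>v. onorm (\<lambda>x. A i (S v x))))"
proof -
  note hyp = hyp3[OF Cid Tinj3 Tsurj bTi]
  note AT = AT[OF Cid Tinj3 Tsurj bTi]
  note Ti_D3 = Ti_D3[OF Cid Tinj3 Tsurj bTi]
  note S_repr = S_repr[OF Cid Tinj3 Tsurj bTi SR]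
  have Sb: "bounded_clinear (S j)" for j by (rule S_bcl[OF hyp SR])
  have S0x: "S 0 x = k 0 *\<^sub>C Ti x" for x using S0[OF hyp SR] Cid by simp
  have TiA: "Ti (A i w) = A i (Ti w)" if i: "i \<in> {1..n}" and w: "w \<in> DA i" for i w
  proof -
    have "A i (S 0 w) = S 0 (A i w)" using FI i w unfolding disc_exist_fam_I_def by blast
    then have "k 0 *\<^sub>C A i (Ti w) = k 0 *\<^sub>C Ti (A i w)"
      using Ti_D3 D_DA[OF _ i] by (simp add: S0x clop_scale[OF Aop[OF i]])
    then show ?thesis using k0 scaleC_left_imp_eq by metis
  qed
  have repr: "S v x = k v *\<^sub>C Ti x + (\<Sum>i=1..n. \<Sum>j<v. a i (v - j) *\<^sub>C A i (Ti (S j x)))" for v x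
  proof -
    have "Ti (A i (tail_sum (a i) S v x)) = (\<Sum>j<v. a i (v - j) *\<^sub>C A i (Ti (S j x)))" if i: "i \<in> {1..n}" for i
    proof -
      have "Ti (A i (tail_sum (a i) S v x)) = A i (Ti (tail_sum (a i) S v x))"
        by (rule TiA[OF i D_DA[OF S_tail_D[OF hyp SR] i]])
      also have "\<dots> = (\<Sum>j<v. a i (v - j) *\<^sub>C A i (Ti (S j x)))"
        unfolding tail_sum_def
        using bcl_sum[OF AT[OF i], of "\<lambda>j. a i (v - j) *\<^sub>C S j x" "{..<v}"] bcl_scaleC[OF AT[OF i]]
        by simp
      finally show ?thesis .
    qed
    then show ?thesis using S_repr[of v x] by simp
  qed
  have hb: "bounded_clinear (\<lambda>x. A i (Ti (S j x)))" if "i \<in> {1..n}" for i j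
    by (rule bcl_comp[OF AT[OF that] Sb])
  have sS: "summable (\<lambda>v. onorm (S v))"
  proof (rule renewal_summable[where I="{1..n}" and \<alpha>="\<lambda>i r. cmod (a i r)" and q="\<lambda>i. onorm (\<lambda>x. A i (Ti x))"
        and c="\<lambda>v. cmod (k v) * onorm Ti"])
    show "summable (\<lambda>v. cmod (k v) * onorm Ti)" by (rule summable_mult2[OF sk])
    show "0 \<le> cmod (k v) * onorm Ti" for v using onorm_nn[OF bTi] by simp
    show "0 \<le> onorm (S v)" for v by (rule onorm_nn[OF Sb])
    show "0 \<le> onorm (\<lambda>x. A i (Ti x))" if "i \<in> {1..n}" for i by (rule onorm_nn[OF AT[OF that]])
    fix v
    have "onorm (S v) \<le> cmod (k v) * onorm Ti + (\<Sum>i\<in>{1..n}. \<Sum>j<v. cmod (a i (v - j)) * onorm (\<lambda>x. A i (Ti (S j x))))"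
      by (rule onorm_repr[OF bTi hb repr])
    also have "\<dots> \<le> cmod (k v) * onorm Ti + (\<Sum>i\<in>{1..n}. \<Sum>j<v. cmod (a i (v - j)) * (onorm (\<lambda>x. A i (Ti x)) * onorm (S j)))"
      by (intro add_left_mono sum_mono mult_left_mono onorm_comp_le[of "\<lambda>x. A i (Ti x)" for i, simplified] AT Sb) auto
    finally show "onorm (S v) \<le> cmod (k v) * onorm Ti +
      (\<Sum>i\<in>{1..n}. \<Sum>j<v. cmod (a i (v - j)) * onorm (\<lambda>x. A i (Ti x)) * onorm (S j))" by (simp add: mult.assoc)
  qed (use sa th in auto)
  have sAS: "summable (\<lambda>v. onorm (\<lambda>x. A i (S v x)))" if i: "i \<in> {1..n}" for i
  proof -
    have ASb: "bounded_clinear (\<lambda>x. A i (S j x))" for j by (rule S_AS[OF hyp SR i])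
    have hb2: "bounded_clinear (\<lambda>x. A l (Ti (A i (S j x))))" if "l \<in> {1..n}" for l j
      by (rule bcl_comp[OF AT[OF that] ASb])
    have reprA: "A i (S v x) = k v *\<^sub>C A i (Ti x) + (\<Sum>l=1..n. \<Sum>j<v. a l (v - j) *\<^sub>C A l (Ti (A i (S j x))))" for v x
    proof -
      have mem: "A l (Ti (S j x)) \<in> DA i" if l: "l \<in> {1..n}" for l j
        using TiA[OF l D_DA[OF S_D[OF hyp SR] l]] Ti_D3 D_DA[OF _ i] by metis
      have mem2: "a l (v - j) *\<^sub>C A l (Ti (S j x)) \<in> DA i" if l: "l \<in> {1..n}" for l j
        by (rule csub_scale[OF csub_DA[OF i] mem[OF l]])
      have mem3: "(\<Sum>j<v. a l (v - j) *\<^sub>C A l (Ti (S j x))) \<in> DA i" if l: "l \<in> {1..n}" for l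
        by (rule csub_sum[OF csub_DA[OF i]]) (rule mem2[OF l])
      have mem4: "(\<Sum>l=1..n. \<Sum>j<v. a l (v - j) *\<^sub>C A l (Ti (S j x))) \<in> DA i"
        by (rule csub_sum[OF csub_DA[OF i]]) (rule mem3)
      have tx: "Ti x \<in> DA i" using Ti_D3 D_DA[OF _ i] by blast
      have swap: "A i (A l (Ti (S j x))) = A l (Ti (A i (S j x)))" if l: "l \<in> {1..n}" for l j
      proof -
        have "A i (A l (Ti (S j x))) = A l (A i (Ti (S j x)))" using AAc i l S_D[OF hyp SR] by blast
        also have "\<dots> = A l (Ti (A i (S j x)))" using TiA[OF i D_DA[OF S_D[OF hyp SR] i]] by simp
        finally show ?thesis .
      qed
      have "A i (S v x) = A i (k v *\<^sub>C Ti x) + A i (\<Sum>l=1..n. \<Sum>j<v. a l (v - j) *\<^sub>C A l (Ti (S j x)))"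
        by (subst repr) (rule clop_add[OF Aop[OF i] csub_scale[OF csub_DA[OF i] tx] mem4])
      also have "A i (\<Sum>l=1..n. \<Sum>j<v. a l (v - j) *\<^sub>C A l (Ti (S j x))) = (\<Sum>l=1..n. A i (\<Sum>j<v. a l (v - j) *\<^sub>C A l (Ti (S j x))))"
        by (rule clop_sum[OF Aop[OF i]]) (rule mem3)
      also have "\<dots> = (\<Sum>l=1..n. \<Sum>j<v. A i (a l (v - j) *\<^sub>C A l (Ti (S j x))))"
        by (rule sum.cong[OF refl], rule clop_sum[OF Aop[OF i]]) (rule mem2, simp)
      also have "\<dots> = (\<Sum>l=1..n. \<Sum>j<v. a l (v - j) *\<^sub>C A l (Ti (A i (S j x))))"
        by (intro sum.cong refl) (simp add: clop_scale[OF Aop[OF i]] mem swap)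
      finally show ?thesis using tx by (simp add: clop_scale[OF Aop[OF i]])
    qed
    show ?thesis
    proof (rule renewal_summable[where I="{1..n}" and \<alpha>="\<lambda>i r. cmod (a i r)" and q="\<lambda>i. onorm (\<lambda>x. A i (Ti x))"
          and c="\<lambda>v. cmod (k v) * onorm (\<lambda>x. A i (Ti x))"])
      show "summable (\<lambda>v. cmod (k v) * onorm (\<lambda>x. A i (Ti x)))" by (rule summable_mult2[OF sk])
      show "0 \<le> cmod (k v) * onorm (\<lambda>x. A i (Ti x))" for v using onorm_nn[OF AT[OF i]] by simp
      show "0 \<le> onorm (\<lambda>x. A i (S v x))" for v by (rule onorm_nn[OF ASb])
      show "0 \<le> onorm (\<lambda>x. A l (Ti x))" if "l \<in> {1..n}" for l by (rule onorm_nn[OF AT[OF that]])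
      fix v
      have "onorm (\<lambda>x. A i (S v x)) \<le> cmod (k v) * onorm (\<lambda>x. A i (Ti x)) +
          (\<Sum>l\<in>{1..n}. \<Sum>j<v. cmod (a l (v - j)) * onorm (\<lambda>x. A l (Ti (A i (S j x)))))"
        by (rule onorm_repr[OF AT[OF i] hb2 reprA])
      also have "\<dots> \<le> cmod (k v) * onorm (\<lambda>x. A i (Ti x)) +
          (\<Sum>l\<in>{1..n}. \<Sum>j<v. cmod (a l (v - j)) * (onorm (\<lambda>x. A l (Ti x)) * onorm (\<lambda>x. A i (S j x))))"
        by (intro add_left_mono sum_mono mult_left_mono onorm_comp_le[of "\<lambda>x. A l (Ti x)" for l, simplified] AT ASb) auto
      finally show "onorm (\<lambda>x. A i (S v x)) \<le> cmod (k v) * onorm (\<lambda>x. A i (Ti x)) +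
          (\<Sum>l\<in>{1..n}. \<Sum>j<v. cmod (a l (v - j)) * onorm (\<lambda>x. A l (Ti x)) * onorm (\<lambda>x. A i (S j x)))"
        by (simp add: mult.assoc)
    qed (use sa th in auto)
  qed
  have sC: "summable (\<lambda>v. onorm (\<lambda>x. A i (conv0 (a i) S v x)))" if i: "i \<in> {1..n}" for i
  proof -
    have ASb: "bounded_clinear (\<lambda>x. A i (S j x))" for j by (rule S_AS[OF hyp SR i])
    have eq: "A i (conv0 (a i) S v x) = (\<Sum>j\<in>{..v}. a i (v - j) *\<^sub>C A i (S j x))" for v x
      unfolding conv0_def atLeast0AtMost[symmetric] using S_D[OF hyp SR] D_DA[OF _ i]
      by (simp add: clop_sum[OF Aop[OF i]] clop_scale[OF Aop[OF i]] csub_scale[OF csub_DA[OF i]])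
    have b1: "onorm (\<lambda>x. A i (conv0 (a i) S v x)) \<le> (\<Sum>j\<le>v. cmod (a i (v - j)) * onorm (\<lambda>x. A i (S j x)))" for v
      by (rule onorm_conv[OF ASb eq])
    have cs: "summable (\<lambda>v. \<Sum>j\<le>v. norm (a i (v - j)) * onorm (\<lambda>x. A i (S j x)))"
      by (rule conv_summable'[where t="\<lambda>j. onorm (\<lambda>x. A i (S j x))" and b="a i"])
         (use sAS[OF i] sa i onorm_nn[OF ASb] in auto)
    have cb: "0 \<le> onorm (\<lambda>x. A i (conv0 (a i) S v x))" for v
      by (rule onorm_nn[OF famCB[OF S_fam[OF hyp SR] i]])
    show ?thesis
      by (rule summable_comparison_test[OF _ cs]) (use b1 cb in \<open>auto intro!: exI[of _ 0]\<close>)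
  qed
  show ?thesis using sS sC sAS by blast
qed

end

end

context tpoly
begin

lemma poly_AAc:
  assumes Cid: "C = id" and hyp: "hyp_ii C DB B DA A a n" and SR: "S_rec k C DB B DA A a n S"
  shows "\<forall>i\<in>{1..n}. \<forall>l\<in>{1..n}. \<forall>w\<in>D. A i (A l (Ti w)) = A l (A i (Ti w))"
proof (intro ballI)
  fix i l w assume i: "i \<in> {1..n}" and l: "l \<in> {1..n}" and w: "w \<in> D"
  show "A i (A l (Ti w)) = A l (A i (Ti w))"
  proof (cases "PT = 0")
    case True then show ?thesis using PT0_triv[OF hyp SR] by metis
  next
    case False
    have wm: "w \<in> Dom m" using w D_eq by blast
    have "S 0 w \<in> Dom (m + m)" using main_ind[OF hyp SR False, of 0] wm by blast
    moreover have "S 0 w = k 0 *\<^sub>C Ti w" using S0[OF hyp SR] Cid by simp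
    ultimately have "inverse (k 0) *\<^sub>C (k 0 *\<^sub>C Ti w) \<in> Dom (m + m)" by (metis csub_scale[OF Dom_csub])
    then have u: "Ti w \<in> Dom (m + m)" using k0 by simp
    have uD: "Ti w \<in> D" using Dom_mono[OF _ u, of m] D_eq by simp
    have Aeq: "A j x = pf m (P j) x" if j: "j \<in> {1..n}" and x: "x \<in> D" for j x
      using A_eq[OF j D_DA[OF x j]] pf_deg'[OF degA[OF j]] by simp
    have Dm: "pf m (P j) (Ti w) \<in> D" for j using pf_Dom[OF u] D_eq by blast
    have "A i (A l (Ti w)) = pf m (P i) (pf m (P l) (Ti w))" using Aeq[OF l uD] Aeq[OF i Dm] by simp
    also have "\<dots> = pf m (P l) (pf m (P i) (Ti w))" by (rule pf_pf[OF u])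
    also have "\<dots> = A l (A i (Ti w))" using Aeq[OF i uD] Aeq[OF l Dm] by simp
    finally show ?thesis .
  qed
qed

end

theorem theorem3p3:
  fixes n :: nat
    and DB :: "'a::complex_banach set" and B :: "'a \<Rightarrow> 'a"
    and DA :: "nat \<Rightarrow> 'a set" and A :: "nat \<Rightarrow> 'a \<Rightarrow> 'a"
    and C :: "'a \<Rightarrow> 'a"
    and k :: "nat \<Rightarrow> complex" and a :: "nat \<Rightarrow> nat \<Rightarrow> complex"
  assumes n_pos: "1 \<le> n"
    and B_closed: "closed_op DB B"
    and A_closed: "\<forall>i\<in>{1..n}. closed_op (DA i) (A i)"
    and C_bdd: "bounded_clinear C" and C_inj: "inj C"
    and k0: "k 0 \<noteq> 0"
    and a0: "\<forall>i\<in>{1..n}. a i 0 \<noteq> 0"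
  shows
  \<comment> \<open>(i)\<close>
  "(\<forall>S. disc_exist_fam k C DB B DA A a n S \<and>
        (\<forall>x\<in>Tdom DB DA n. S 0 (B x) = B (S 0 x) \<and> (\<forall>i\<in>{1..n}. S 0 (A i x) = A i (S 0 x)))
     \<longrightarrow> inj_on (Top B A a n) (Tdom DB DA n) \<and>
         range C \<subseteq> Top B A a n ` Tdom DB DA n \<and>
         bounded_clinear (\<lambda>x. Tinv DB DA B A a n (C x)) \<and>
         S 0 = (\<lambda>x. k 0 *\<^sub>C Tinv DB DA B A a n (C x)) \<and>
         (\<forall>v\<ge>1. \<forall>x. (\<forall>i\<in>{1..n}. tail_sum (a i) S v x \<in> DA i) \<and>
                    rec_rhs k C A a n S v x \<in> Top B A a n ` Tdom DB DA n \<and>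
                    S v x = Tinv DB DA B A a n (rec_rhs k C A a n S v x)) \<and>
         (\<forall>i\<in>{1..n}. \<forall>v. range (S v) \<subseteq> DA i \<and> bounded_clinear (\<lambda>x. A i (S v x))))
   \<and>
  \<comment> \<open>(ii)\<close>
   (hyp_ii C DB B DA A a n \<longrightarrow>
     (\<forall>S. S_rec k C DB B DA A a n S \<longrightarrow>
        (\<forall>v\<ge>1. \<forall>x. (\<forall>i\<in>{1..n}. tail_sum (a i) S v x \<in> DA i) \<and>
                   rec_rhs k C A a n S v x \<in> Top B A a n ` Tdom DB DA n) \<and>
        (\<forall>v. bounded_clinear (S v)) \<and>
        (\<forall>i\<in>{1..n}. \<forall>v. range (S v) \<subseteq> DA i \<and> bounded_clinear (\<lambda>x. A i (S v x))) \<and>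
        disc_exist_fam k C DB B DA A a n S \<and>
        (\<forall>S'. disc_exist_fam k C DB B DA A a n S' \<longrightarrow> S' = S) \<and>
        (\<forall>I. I \<subseteq> {1..n} \<and> U1 C DB B DA A n I \<and> U2 DB B DA A n I \<and> U3 DA A n I
              \<longrightarrow> disc_exist_fam_I k C DB B DA A a n I S) \<and>
        ((\<exists>D0 A0. closed_op D0 A0 \<and> op_commutes_bdd C D0 A0 \<and> poly_of_common_op DB B DA A n D0 A0)
              \<longrightarrow> disc_exist_fam_I k C DB B DA A a n {} S)))
   \<and>
  \<comment> \<open>(iii)\<close>
   (C = id \<and>
    inj_on (Top B A a n) (Tdom DB DA n) \<and> Top B A a n ` Tdom DB DA n = UNIV \<and>
    bounded_clinear (Tinv DB DA B A a n) \<and>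
    (\<forall>i\<in>{1..n}. summable (\<lambda>v. cmod (a i v))) \<and> summable (\<lambda>v. cmod (k v)) \<and>
    (((\<forall>i\<in>{1..n}. DA i = UNIV \<and> bounded_clinear (A i)) \<and>
      (\<Sum>i=1..n. \<Sum>v. cmod (a i (Suc v)) * onorm (\<lambda>x. Tinv DB DA B A a n (A i x))) < 1)
     \<or>
     ((U1 C DB B DA A n {} \<and> U2 DB B DA A n {} \<and> U3 DA A n {} \<or>
       (\<exists>D0 A0. closed_op D0 A0 \<and> poly_of_common_op DB B DA A n D0 A0)) \<and>
      (\<Sum>i=1..n. \<Sum>v. cmod (a i (Suc v)) * onorm (\<lambda>x. A i (Tinv DB DA B A a n x))) < 1))
   \<longrightarrow> hyp_ii C DB B DA A a n \<and>
       (\<forall>S. S_rec k C DB B DA A a n S \<longrightarrow>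
          summable (\<lambda>v. onorm (S v)) \<and>
          (\<forall>i\<in>{1..n}. summable (\<lambda>v. onorm (\<lambda>x. A i (conv0 (a i) S v x)))) \<and>
          (((U1 C DB B DA A n {} \<and> U2 DB B DA A n {} \<and> U3 DA A n {} \<or>
             (\<exists>D0 A0. closed_op D0 A0 \<and> poly_of_common_op DB B DA A n D0 A0)) \<and>
            (\<Sum>i=1..n. \<Sum>v. cmod (a i (Suc v)) * onorm (\<lambda>x. A i (Tinv DB DA B A a n x))) < 1)
           \<longrightarrow> (\<forall>i\<in>{1..n}. summable (\<lambda>v. onorm (\<lambda>x. A i (S v x)))))))"
proof -
  interpret ts: tsetup n DB B DA A C k a
    by (rule tsetup.intro) (use B_closed A_closed C_bdd C_inj k0 a0 in auto)
  have P1: "\<forall>S. disc_exist_fam k C DB B DA A a n S \<and>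
        (\<forall>x\<in>Tdom DB DA n. S 0 (B x) = B (S 0 x) \<and> (\<forall>i\<in>{1..n}. S 0 (A i x) = A i (S 0 x)))
     \<longrightarrow> inj_on (Top B A a n) (Tdom DB DA n) \<and>
         range C \<subseteq> Top B A a n ` Tdom DB DA n \<and>
         bounded_clinear (\<lambda>x. Tinv DB DA B A a n (C x)) \<and>
         S 0 = (\<lambda>x. k 0 *\<^sub>C Tinv DB DA B A a n (C x)) \<and>
         (\<forall>v\<ge>1. \<forall>x. (\<forall>i\<in>{1..n}. tail_sum (a i) S v x \<in> DA i) \<and>
                    rec_rhs k C A a n S v x \<in> Top B A a n ` Tdom DB DA n \<and>
                    S v x = Tinv DB DA B A a n (rec_rhs k C A a n S v x)) \<and>
         (\<forall>i\<in>{1..n}. \<forall>v. range (S v) \<subseteq> DA i \<and> bounded_clinear (\<lambda>x. A i (S v x)))"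
  proof (intro allI impI)
    fix S assume "disc_exist_fam k C DB B DA A a n S \<and>
        (\<forall>x\<in>Tdom DB DA n. S 0 (B x) = B (S 0 x) \<and> (\<forall>i\<in>{1..n}. S 0 (A i x) = A i (S 0 x)))"
    then show "inj_on (Top B A a n) (Tdom DB DA n) \<and>
         range C \<subseteq> Top B A a n ` Tdom DB DA n \<and>
         bounded_clinear (\<lambda>x. Tinv DB DA B A a n (C x)) \<and>
         S 0 = (\<lambda>x. k 0 *\<^sub>C Tinv DB DA B A a n (C x)) \<and>
         (\<forall>v\<ge>1. \<forall>x. (\<forall>i\<in>{1..n}. tail_sum (a i) S v x \<in> DA i) \<and>
                    rec_rhs k C A a n S v x \<in> Top B A a n ` Tdom DB DA n \<and>
                    S v x = Tinv DB DA B A a n (rec_rhs k C A a n S v x)) \<and>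
         (\<forall>i\<in>{1..n}. \<forall>v. range (S v) \<subseteq> DA i \<and> bounded_clinear (\<lambda>x. A i (S v x)))"
      using ts.part_i by blast
  qed
  have P2: "hyp_ii C DB B DA A a n \<longrightarrow>
     (\<forall>S. S_rec k C DB B DA A a n S \<longrightarrow>
        (\<forall>v\<ge>1. \<forall>x. (\<forall>i\<in>{1..n}. tail_sum (a i) S v x \<in> DA i) \<and>
                   rec_rhs k C A a n S v x \<in> Top B A a n ` Tdom DB DA n) \<and>
        (\<forall>v. bounded_clinear (S v)) \<and>
        (\<forall>i\<in>{1..n}. \<forall>v. range (S v) \<subseteq> DA i \<and> bounded_clinear (\<lambda>x. A i (S v x))) \<and>
        disc_exist_fam k C DB B DA A a n S \<and>
        (\<forall>S'. disc_exist_fam k C DB B DA A a n S' \<longrightarrow> S' = S) \<and>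
        (\<forall>I. I \<subseteq> {1..n} \<and> U1 C DB B DA A n I \<and> U2 DB B DA A n I \<and> U3 DA A n I
              \<longrightarrow> disc_exist_fam_I k C DB B DA A a n I S) \<and>
        ((\<exists>D0 A0. closed_op D0 A0 \<and> op_commutes_bdd C D0 A0 \<and> poly_of_common_op DB B DA A n D0 A0)
              \<longrightarrow> disc_exist_fam_I k C DB B DA A a n {} S))"
  proof (intro impI allI)
    fix S assume hyp: "hyp_ii C DB B DA A a n" and SR: "S_rec k C DB B DA A a n S"
    have c1: "\<forall>v\<ge>1. \<forall>x. (\<forall>i\<in>{1..n}. tail_sum (a i) S v x \<in> DA i) \<and>
                   rec_rhs k C A a n S v x \<in> Top B A a n ` Tdom DB DA n"
      using ts.S_tail_D[OF hyp SR] ts.D_DA ts.S_rr[OF hyp SR] by blast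
    have c2: "\<forall>i\<in>{1..n}. \<forall>v. range (S v) \<subseteq> DA i \<and> bounded_clinear (\<lambda>x. A i (S v x))"
      using ts.S_D[OF hyp SR] ts.D_DA ts.S_AS[OF hyp SR] by blast
    have c3: "\<forall>I. I \<subseteq> {1..n} \<and> U1 C DB B DA A n I \<and> U2 DB B DA A n I \<and> U3 DA A n I
              \<longrightarrow> disc_exist_fam_I k C DB B DA A a n I S"
      using ts.part_ii_I[OF hyp SR] by blast
    have c4: "disc_exist_fam_I k C DB B DA A a n {} S"
      if ex: "\<exists>D0 A0. closed_op D0 A0 \<and> op_commutes_bdd C D0 A0 \<and> poly_of_common_op DB B DA A n D0 A0"
    proof -
      obtain D0 A0 where D0: "closed_op D0 A0" "op_commutes_bdd C D0 A0" "poly_of_common_op DB B DA A n D0 A0"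
        using ex by blast
      obtain PB P where PP: "is_poly_of DB B D0 A0 PB" "\<forall>i\<in>{1..n}. is_poly_of (DA i) (A i) D0 A0 (P i)"
        using D0(3) unfolding poly_of_common_op_def by blast
      interpret tp: tpoly n DB B DA A C k a D0 A0 PB P
        by (intro tpoly.intro tsetup.intro pcalc.intro tpoly_axioms.intro)
           (use B_closed A_closed C_bdd C_inj k0 a0 D0 PP in \<open>simp_all add: closed_op_def\<close>)
      show ?thesis by (rule tp.part_ii_poly[OF hyp SR])
    qed
    show "(\<forall>v\<ge>1. \<forall>x. (\<forall>i\<in>{1..n}. tail_sum (a i) S v x \<in> DA i) \<and>
                   rec_rhs k C A a n S v x \<in> Top B A a n ` Tdom DB DA n) \<and>
        (\<forall>v. bounded_clinear (S v)) \<and>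
        (\<forall>i\<in>{1..n}. \<forall>v. range (S v) \<subseteq> DA i \<and> bounded_clinear (\<lambda>x. A i (S v x))) \<and>
        disc_exist_fam k C DB B DA A a n S \<and>
        (\<forall>S'. disc_exist_fam k C DB B DA A a n S' \<longrightarrow> S' = S) \<and>
        (\<forall>I. I \<subseteq> {1..n} \<and> U1 C DB B DA A n I \<and> U2 DB B DA A n I \<and> U3 DA A n I
              \<longrightarrow> disc_exist_fam_I k C DB B DA A a n I S) \<and>
        ((\<exists>D0 A0. closed_op D0 A0 \<and> op_commutes_bdd C D0 A0 \<and> poly_of_common_op DB B DA A n D0 A0)
              \<longrightarrow> disc_exist_fam_I k C DB B DA A a n {} S)"
      using c1 c2 c3 c4 ts.S_bcl[OF hyp SR] ts.S_fam[OF hyp SR] ts.S_unique[OF hyp SR] by blast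
  qed
  have P3: "C = id \<and>
    inj_on (Top B A a n) (Tdom DB DA n) \<and> Top B A a n ` Tdom DB DA n = UNIV \<and>
    bounded_clinear (Tinv DB DA B A a n) \<and>
    (\<forall>i\<in>{1..n}. summable (\<lambda>v. cmod (a i v))) \<and> summable (\<lambda>v. cmod (k v)) \<and>
    (((\<forall>i\<in>{1..n}. DA i = UNIV \<and> bounded_clinear (A i)) \<and>
      (\<Sum>i=1..n. \<Sum>v. cmod (a i (Suc v)) * onorm (\<lambda>x. Tinv DB DA B A a n (A i x))) < 1)
     \<or>
     ((U1 C DB B DA A n {} \<and> U2 DB B DA A n {} \<and> U3 DA A n {} \<or>
       (\<exists>D0 A0. closed_op D0 A0 \<and> poly_of_common_op DB B DA A n D0 A0)) \<and>
      (\<Sum>i=1..n. \<Sum>v. cmod (a i (Suc v)) * onorm (\<lambda>x. A i (Tinv DB DA B A a n x))) < 1))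
   \<longrightarrow> hyp_ii C DB B DA A a n \<and>
       (\<forall>S. S_rec k C DB B DA A a n S \<longrightarrow>
          summable (\<lambda>v. onorm (S v)) \<and>
          (\<forall>i\<in>{1..n}. summable (\<lambda>v. onorm (\<lambda>x. A i (conv0 (a i) S v x)))) \<and>
          (((U1 C DB B DA A n {} \<and> U2 DB B DA A n {} \<and> U3 DA A n {} \<or>
             (\<exists>D0 A0. closed_op D0 A0 \<and> poly_of_common_op DB B DA A n D0 A0)) \<and>
            (\<Sum>i=1..n. \<Sum>v. cmod (a i (Suc v)) * onorm (\<lambda>x. A i (Tinv DB DA B A a n x))) < 1)
           \<longrightarrow> (\<forall>i\<in>{1..n}. summable (\<lambda>v. onorm (\<lambda>x. A i (S v x))))))"
    (is "?H \<longrightarrow> ?C")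
  proof (intro impI)
    assume H: ?H
    then have Cid: "C = id" and Tinj: "inj_on (Top B A a n) (Tdom DB DA n)"
      and Tsurj: "Top B A a n ` Tdom DB DA n = UNIV" and bTi: "bounded_clinear (Tinv DB DA B A a n)"
      and sa: "\<forall>i\<in>{1..n}. summable (\<lambda>v. cmod (a i v))" and sk: "summable (\<lambda>v. cmod (k v))"
      by blast+
    have hyp: "hyp_ii C DB B DA A a n" by (rule ts.hyp3[OF Cid Tinj Tsurj bTi])
    have B: "summable (\<lambda>v. onorm (S v)) \<and>
         (\<forall>i\<in>{1..n}. summable (\<lambda>v. onorm (\<lambda>x. A i (conv0 (a i) S v x)))) \<and>
         (\<forall>i\<in>{1..n}. summable (\<lambda>v. onorm (\<lambda>x. A i (S v x))))"
      if SR: "S_rec k C DB B DA A a n S"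
        and bc: "(U1 C DB B DA A n {} \<and> U2 DB B DA A n {} \<and> U3 DA A n {} \<or>
             (\<exists>D0 A0. closed_op D0 A0 \<and> poly_of_common_op DB B DA A n D0 A0)) \<and>
            (\<Sum>i=1..n. \<Sum>v. cmod (a i (Suc v)) * onorm (\<lambda>x. A i (Tinv DB DA B A a n x))) < 1"
      for S
    proof -
      have th: "(\<Sum>i=1..n. \<Sum>v. cmod (a i (Suc v)) * onorm (\<lambda>x. A i (Tinv DB DA B A a n x))) < 1"
        using bc by blast
      have FA: "disc_exist_fam_I k C DB B DA A a n {} S \<and>
        (\<forall>i\<in>{1..n}. \<forall>l\<in>{1..n}. \<forall>w\<in>Tdom DB DA n. A i (A l (Tinv DB DA B A a n w)) = A l (A i (Tinv DB DA B A a n w)))"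
      proof (cases "U1 C DB B DA A n {} \<and> U2 DB B DA A n {} \<and> U3 DA A n {}")
        case True
        then have U: "U1 C DB B DA A n {}" "U2 DB B DA A n {}" "U3 DA A n {}" by blast+
        have FI: "disc_exist_fam_I k C DB B DA A a n {} S" by (rule ts.part_ii_I[OF hyp SR U])
        have "A i (A l (Tinv DB DA B A a n w)) = A l (A i (Tinv DB DA B A a n w))"
          if "i \<in> {1..n}" "l \<in> {1..n}" for i l w
        proof -
          have "Tinv DB DA B A a n w \<in> DA i \<inter> DA l"
            using ts.Ti_D3[OF Cid Tinj Tsurj bTi] ts.D_DA that by blast
          then show ?thesis using U(3) that unfolding U3_def by auto
        qed
        then show ?thesis using FI by blast
      next
        case False
        then obtain D0 A0 where D0: "closed_op D0 A0" "poly_of_common_op DB B DA A n D0 A0"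
          using bc by blast
        obtain PB P where PP: "is_poly_of DB B D0 A0 PB" "\<forall>i\<in>{1..n}. is_poly_of (DA i) (A i) D0 A0 (P i)"
          using D0(2) unfolding poly_of_common_op_def by blast
        have cm: "op_commutes_bdd C D0 A0" using Cid by (simp add: op_commutes_bdd_def)
        interpret tp: tpoly n DB B DA A C k a D0 A0 PB P
          by (intro tpoly.intro tsetup.intro pcalc.intro tpoly_axioms.intro)
             (use B_closed A_closed C_bdd C_inj k0 a0 D0 PP cm in \<open>simp_all add: closed_op_def\<close>)
        show ?thesis using tp.part_ii_poly[OF hyp SR] tp.poly_AAc[OF Cid hyp SR] by blast
      qed
      show ?thesis using ts.case_b[OF Cid Tinj Tsurj bTi SR] FA sa sk th by blast
    qed
    show ?C
    proof (intro conjI allI impI)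
      show "hyp_ii C DB B DA A a n" by (rule hyp)
      fix S assume SR: "S_rec k C DB B DA A a n S"
      have AB: "summable (\<lambda>v. onorm (S v)) \<and>
          (\<forall>i\<in>{1..n}. summable (\<lambda>v. onorm (\<lambda>x. A i (conv0 (a i) S v x))))"
      proof (cases "(\<forall>i\<in>{1..n}. DA i = UNIV \<and> bounded_clinear (A i)) \<and>
          (\<Sum>i=1..n. \<Sum>v. cmod (a i (Suc v)) * onorm (\<lambda>x. Tinv DB DA B A a n (A i x))) < 1")
        case True
        then show ?thesis using ts.case_a[OF Cid Tinj Tsurj bTi SR] sa sk by blast
      next
        case False
        then show ?thesis using H B[OF SR] by blast
      qed
      then show "summable (\<lambda>v. onorm (S v))"
        "\<forall>i\<in>{1..n}. summable (\<lambda>v. onorm (\<lambda>x. A i (conv0 (a i) S v x)))" by blast+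
      show "\<forall>i\<in>{1..n}. summable (\<lambda>v. onorm (\<lambda>x. A i (S v x)))"
        if "(U1 C DB B DA A n {} \<and> U2 DB B DA A n {} \<and> U3 DA A n {} \<or>
             (\<exists>D0 A0. closed_op D0 A0 \<and> poly_of_common_op DB B DA A n D0 A0)) \<and>
            (\<Sum>i=1..n. \<Sum>v. cmod (a i (Suc v)) * onorm (\<lambda>x. A i (Tinv DB DA B A a n x))) < 1"
        using B[OF SR that] by blast
    qed
  qed
  show ?thesis using P1 P2 P3 by blast
qed

end
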